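(* With the construction described in the context, as $N\to+\infty$, $$\frac{1}{\sum_{n\in\mathbb{N}}f(n)^2}\sum_{\substack{n\in\mathbb{N}\\ n\notin\mathcal{M}}}\frac{f(n)h(n)}{n^{\sigma}}\sum_{q\mid n}f(q)q^{\sigma}=o(\mathcal{A}_N).$$
   Context: Notation: $\log_2 x=\log\log x$, $\log_3 x=\log\log\log x$. Fix $A>0$. Let $N$ be a large parameter and $\sigma=\frac12+\frac{A}{\log_2 N}$. Fix $\gamma\in(0,(e-1)^{-1})$. Let $\mathcal{P}$ be the set of primes $p$ with $e\log N\log_2 N<p\le \exp((\log_2 N)^{\gamma})\log N\log_2 N$. Let $f$ be the multiplicative function supported on squarefree integers (so $f(1)=1$) with $f(p)=\dfrac{(\log N)^{1-\sigma}(\log_2 N)^{\sigma}}{(\log_3 N)^{1-\sigma}}\cdot\dfrac{1}{p^{\sigma}(\log p-\log_2 N-\log_3 N)}$ for $p\in\mathcal{P}$ and $f(p)=0$ for primes $p\notin\mathcal{P}$. For $k\in\{1,\dots,\lfloor(\log_2N)^{\gamma}\rfloor\}$ let $\mathcal{P}_k$ be the set of primes $p$ with $e^k\log N\log_2N<p\le e^{k+1}\log N\log_2 N$. Fix a real number $a$ with $e-1<a<1/\gamma$, put $\Delta_k=\dfrac{a(\log N)^{2-2\sigma}}{k^2(\log_3N)^{2-2\sigma}}$, and let $\mathcal{M}_k$ be the set of $n\in\operatorname{supp}(f)$ having at least $\Delta_k$ prime divisors in $\mathcal{P}_k$. Set $\mathcal{M}=\operatorname{supp}(f)\setminus\bigcup_{k=1}^{\lfloor(\log_2N)^{\gamma}\rfloor}\mathcal{M}_k$.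 Let $h$ be the multiplicative function $h(n)=\prod_{p\mid n}\frac{p}{p+1}$ ($h(1)=1$). Define $$\mathcal{A}_N=\frac{1}{\sum_{n\in\mathbb{N}}f(n)^2}\sum_{n\in\mathbb{N}}\frac{f(n)h(n)}{n^{\sigma}}\sum_{q\mid n}f(q)q^{\sigma}=\prod_{p\in\mathcal{P}}\frac{1+f(p)^2h(p)+f(p)h(p)p^{-\sigma}}{1+f(p)^2}.$$ *)

theory Defs
  imports "HOL-Analysis.Analysis" "HOL-Library.Landau_Symbols"
          "HOL-Computational_Algebra.Squarefree"
begin

(* Parameters: AA = the constant A > 0, gam = gamma, a = the constant a; N = the large parameter.
   log_2 N = ln (ln N), log_3 N = ln (ln (ln N)); all logarithms are natural. *)

definition sig :: "real \<Rightarrow> real \<Rightarrow> real" where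
  "sig AA N = 1/2 + AA / ln (ln N)"

definition PP :: "real \<Rightarrow> real \<Rightarrow> nat set" where
  "PP gam N = {p. prime p \<and> exp 1 * ln N * ln (ln N) < real p
                 \<and> real p \<le> exp (ln (ln N) powr gam) * ln N * ln (ln N)}"

definition fp :: "real \<Rightarrow> real \<Rightarrow> nat \<Rightarrow> real" where
  "fp AA N p = (ln N powr (1 - sig AA N) * ln (ln N) powr (sig AA N)
                 / ln (ln (ln N)) powr (1 - sig AA N))
              * (1 / (real p powr (sig AA N) * (ln (real p) - ln (ln N) - ln (ln (ln N)))))"

definition suppf :: "real \<Rightarrow> real \<Rightarrow> nat set" where
  "suppf gam N = {n. n \<ge> 1 \<and> squarefree n \<and> prime_factors n \<subseteq> PP gam N}"

definition ff :: "real \<Rightarrow> real \<Rightarrow> real \<Rightarrow> nat \<Rightarrow> real" where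
  "ff AA gam N n = (if n \<in> suppf gam N then (\<Prod>p\<in>prime_factors n. fp AA N p) else 0)"

definition hh :: "nat \<Rightarrow> real" where
  "hh n = (\<Prod>p\<in>prime_factors n. real p / (real p + 1))"

definition Pk :: "real \<Rightarrow> nat \<Rightarrow> nat set" where
  "Pk N k = {p. prime p \<and> exp (real k) * ln N * ln (ln N) < real p
               \<and> real p \<le> exp (real k + 1) * ln N * ln (ln N)}"

definition Delta :: "real \<Rightarrow> real \<Rightarrow> real \<Rightarrow> nat \<Rightarrow> real" where
  "Delta AA a N k = a * ln N powr (2 - 2 * sig AA N)
                    / ((real k)\<^sup>2 * ln (ln (ln N)) powr (2 - 2 * sig AA N))"

definition Mk :: "real \<Rightarrow> real \<Rightarrow> real \<Rightarrow> real \<Rightarrow> nat \<Rightarrow> nat set" where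
  "Mk AA gam a N k = {n \<in> suppf gam N. real (card (prime_factors n \<inter> Pk N k)) \<ge> Delta AA a N k}"

definition MM :: "real \<Rightarrow> real \<Rightarrow> real \<Rightarrow> real \<Rightarrow> nat set" where
  "MM AA gam a N = suppf gam N -
     (\<Union>k\<in>{1..nat \<lfloor>ln (ln N) powr gam\<rfloor>}. Mk AA gam a N k)"

definition term_n :: "real \<Rightarrow> real \<Rightarrow> real \<Rightarrow> nat \<Rightarrow> real" where
  "term_n AA gam N n = ff AA gam N n * hh n / real n powr (sig AA N)
       * (\<Sum>q\<in>{q. q dvd n}. ff AA gam N q * real q powr (sig AA N))"

definition AN :: "real \<Rightarrow> real \<Rightarrow> real \<Rightarrow> real" where
  "AN AA gam N = (\<Sum>\<^sub>\<infinity>n\<in>{n. n \<ge> 1}. term_n AA gam N n)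
                 / (\<Sum>\<^sub>\<infinity>n\<in>{n. n \<ge> 1}. (ff AA gam N n)\<^sup>2)"

end

theory Submission
  imports Defs "HOL-Real_Asymp.Real_Asymp"
begin


definition V :: "nat \<Rightarrow> nat \<Rightarrow> nat \<Rightarrow> nat" where
  "V p n K = (\<Sum>k\<in>{1..K}. n div p ^ k)"

lemma Suc_div_pow: "Suc n div d = n div d + (if d dvd Suc n then 1 else 0)"
  by (simp add: div_Suc dvd_eq_mod_eq_0)

lemma card_pow_dvd:
  assumes "prime (p::nat)" "m > 0" "multiplicity p m \<le> K"
  shows "card {k\<in>{1..K}. p ^ k dvd m} = multiplicity p m"
proof -
  have p1: "p \<noteq> 1" using assms prime_gt_1_nat[of p] by auto
  have iff: "\<And>k. p ^ k dvd m \<longleftrightarrow> k \<le> multiplicity p m"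
    using power_dvd_iff_le_multiplicity[of m p] p1 assms by auto
  have "{k\<in>{1..K}. p ^ k dvd m} = {1..multiplicity p m}"
    unfolding iff using assms(3) by auto
  thus ?thesis by simp
qed

lemma mult_le: assumes "prime (p::nat)" "m > 0" shows "multiplicity p m < m"
proof -
  have "p ^ multiplicity p m dvd m" by (rule multiplicity_dvd)
  hence "p ^ multiplicity p m \<le> m" using assms by (simp add: dvd_imp_le)
  moreover have "multiplicity p m < 2 ^ multiplicity p m" by (rule less_exp)
  moreover have "2 ^ multiplicity p m \<le> p ^ multiplicity p m"
    using assms prime_ge_2_nat power_mono by blast
  ultimately show ?thesis by linarith
qed

lemma V_Suc:
  assumes "prime p" "n < K"
  shows "V p (Suc n) K = V p n K + multiplicity p (Suc n)"
proof -
  have "V p (Suc n) K = (\<Sum>k\<in>{1..K}. n div p ^ k + (if p^k dvd Suc n then 1 else 0))"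
    unfolding V_def by (simp add: Suc_div_pow)
  also have "\<dots> = V p n K + card {k\<in>{1..K}. p ^ k dvd Suc n}"
    apply (simp add: V_def sum.distrib sum.If_cases)
    by (intro arg_cong[where f=card]) auto
  also have "card {k\<in>{1..K}. p ^ k dvd Suc n} = multiplicity p (Suc n)"
    using assms mult_le[of p "Suc n"] by (intro card_pow_dvd) auto
  finally show ?thesis .
qed

lemma V_zero: "V p 0 K = 0" by (simp add: V_def)

lemma ln_nat_prime_sum:
  assumes "(m::nat) > 0" "m \<le> M"
  shows "ln (real m) = (\<Sum>p | prime p \<and> p \<le> M. ln (real p) * real (multiplicity p m))"
proof -
  have "real m = real (\<Prod>p\<in>prime_factors m. p ^ multiplicity p m)"
    using prod_prime_factors[of m] assms by simp
  also have "\<dots> = (\<Prod>p\<in>prime_factors m. real p ^ multiplicity p m)" by simp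
  finally have "ln (real m) = ln (\<Prod>p\<in>prime_factors m. real p ^ multiplicity p m)" by simp
  also have "\<dots> = (\<Sum>p\<in>prime_factors m. ln (real p ^ multiplicity p m))"
    by (rule ln_prod) (auto dest: in_prime_factors_imp_prime simp: prime_gt_0_nat)
  also have "\<dots> = (\<Sum>p\<in>prime_factors m. ln (real p) * real (multiplicity p m))"
    by (intro sum.cong refl) (auto simp: ln_realpow prime_factors_multiplicity prime_gt_0_nat mult.commute)
  also have "\<dots> = (\<Sum>p | prime p \<and> p \<le> M. ln (real p) * real (multiplicity p m))"
  proof (rule sum.mono_neutral_left)
    show "finite {p. prime p \<and> p \<le> M}" by auto
    show "prime_factors m \<subseteq> {p. prime p \<and> p \<le> M}"
    proof
      fix x assume "x \<in> prime_factors m"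
      hence "x dvd m" "prime x" by auto
      thus "x \<in> {p. prime p \<and> p \<le> M}" using assms dvd_imp_le[of x m] by auto
    qed
    show "\<forall>i\<in>{p. prime p \<and> p \<le> M} - prime_factors m. ln (real i) * real (multiplicity i m) = 0"
      using assms by (auto simp: prime_factors_multiplicity not_dvd_imp_multiplicity_0)
  qed
  finally show ?thesis .
qed

lemma ln_fact_V:
  assumes "n \<le> M" "M \<le> K"
  shows "ln (fact n :: real) = (\<Sum>p | prime p \<and> p \<le> M. ln (real p) * real (V p n K))"
  using assms
proof (induction n)
  case 0
  then show ?case by (simp add: V_zero)
next
  case (Suc n)
  have "ln (fact (Suc n) :: real) = ln (real (Suc n)) + ln (fact n)"
    by (simp add: ln_mult)
  also have "ln (real (Suc n)) = (\<Sum>p | prime p \<and> p \<le> M. ln (real p) * real (multiplicity p (Suc n)))"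
    using Suc.prems by (intro ln_nat_prime_sum) auto
  also have "ln (fact n :: real) = (\<Sum>p | prime p \<and> p \<le> M. ln (real p) * real (V p n K))"
    using Suc by auto
  also have "(\<Sum>p | prime p \<and> p \<le> M. ln (real p) * real (multiplicity p (Suc n))) + \<dots>
      = (\<Sum>p | prime p \<and> p \<le> M. ln (real p) * real (V p (Suc n) K))"
    by (subst sum.distrib[symmetric], intro sum.cong refl)
       (use Suc.prems in \<open>auto simp: V_Suc algebra_simps\<close>)
  finally show ?case .
qed


definition gg :: "nat \<Rightarrow> real" where
  "gg j = real j + real (j div 30) - real (j div 2) - real (j div 3) - real (j div 5)"

lemma gg_mod: "gg j = gg (j mod 30)"
proof -
  obtain q r where j: "j = 30 * q + r" and r: "r < 30"
    using div_mod_decomp[of j 30] by (metis mod_less_divisor zero_less_numeral mult.commute)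
  have "(30 * q + r) mod 30 = r" using r by simp
  moreover have "(30 * q + r) div 30 = q + r div 30" "(30 * q + r) div 2 = 15 * q + r div 2" "(30 * q + r) div 3 = 10 * q + r div 3"
    "(30 * q + r) div 5 = 6 * q + r div 5" by auto
  ultimately show ?thesis unfolding gg_def j using r by simp
qed

lemma gg_bounds: "0 \<le> gg j \<and> gg j \<le> 1"
proof -
  have "\<forall>r\<in>{..<30}. 0 \<le> gg r \<and> gg r \<le> 1"
    by (simp add: gg_def lessThan_nat_numeral pred_numeral_simps)
  hence "0 \<le> gg (j mod 30) \<and> gg (j mod 30) \<le> 1" by simp
  thus ?thesis using gg_mod by simp
qed

lemma gg_one: "1 \<le> j \<Longrightarrow> j \<le> 5 \<Longrightarrow> gg j = 1"
proof -
  assume "1 \<le> j" "j \<le> 5"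
  hence "j \<in> {1,2,3,4,5}" by auto
  thus ?thesis by (auto simp: gg_def)
qed

definition theta :: "real \<Rightarrow> real" where
  "theta x = (\<Sum>p | prime p \<and> real p \<le> x. ln (real p))"

lemma finite_primes_le: "finite {p::nat. prime p \<and> real p \<le> x}"
proof (rule finite_subset[of _ "{..nat \<lfloor>x\<rfloor>}"])
  show "{p. prime p \<and> real p \<le> x} \<subseteq> {..nat \<lfloor>x\<rfloor>}"
  proof
    fix p assume "p \<in> {p. prime p \<and> real p \<le> x}"
    hence "real p \<le> x" by auto
    hence "int p \<le> \<lfloor>x\<rfloor>" by linarith
    thus "p \<in> {..nat \<lfloor>x\<rfloor>}" by auto
  qed
qed auto

lemma theta_diff:
  assumes "y \<le> x"
  shows "theta x - theta y = (\<Sum>p | prime p \<and> y < real p \<and> real p \<le> x. ln (real p))"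
proof -
  have u: "{p. prime p \<and> real p \<le> x} = {p. prime p \<and> real p \<le> y} \<union> {p. prime p \<and> y < real p \<and> real p \<le> x}"
    using assms by auto
  have f1: "finite {p. prime p \<and> real p \<le> y}" by (rule finite_primes_le)
  have f2: "finite {p. prime p \<and> y < real p \<and> real p \<le> x}"
    by (rule finite_subset[OF _ finite_primes_le[of x]]) auto
  have "theta x = theta y + (\<Sum>p | prime p \<and> y < real p \<and> real p \<le> x. ln (real p))"
    unfolding theta_def u by (rule sum.union_disjoint[OF f1 f2]) auto
  thus ?thesis by simp
qed

lemma ln_prime_nonneg: "prime p \<Longrightarrow> 0 \<le> ln (real p)"
  using prime_ge_1_nat[of p] by simp

lemma theta_mono: "y \<le> x \<Longrightarrow> theta y \<le> theta x"
proof -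
  assume "y \<le> x"
  moreover have "0 \<le> (\<Sum>p | prime p \<and> y < real p \<and> real p \<le> x. ln (real p))"
    by (rule sum_nonneg) (auto intro: ln_prime_nonneg)
  ultimately show ?thesis using theta_diff[of y x] by linarith
qed

lemma theta_nonneg: "theta x \<ge> 0"
  unfolding theta_def by (rule sum_nonneg) (auto intro: ln_prime_nonneg)

lemma theta_small: "x < 2 \<Longrightarrow> theta x = 0"
proof -
  assume x: "x < 2"
  have "{p. prime p \<and> real p \<le> x} = {}"
  proof (safe)
    fix p assume "prime p" "real p \<le> x"
    with prime_ge_2_nat[of p] x show "p \<in> {}" by simp
  qed
  thus ?thesis by (simp only: theta_def sum.empty)
qed


definition Lf :: "nat \<Rightarrow> real" where
  "Lf m = ln (fact m) + ln (fact (m div 30)) - ln (fact (m div 2)) - ln (fact (m div 3)) - ln (fact (m div 5))"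

definition GG :: "nat \<Rightarrow> nat \<Rightarrow> real" where
  "GG p m = (\<Sum>k\<in>{1..m}. gg (m div p ^ k))"

lemma gg_zero: "gg 0 = 0" by (simp add: gg_def)

lemma V_div: "V p (m div d) K = (\<Sum>k\<in>{1..K}. (m div p ^ k) div d)"
  unfolding V_def by (intro sum.cong refl) (metis div_mult2_eq mult.commute)

lemma Lf_eq:
  assumes "m \<ge> 1"
  shows "Lf m = (\<Sum>p | prime p \<and> p \<le> m. ln (real p) * GG p m)"
proof -
  define S where "S = {p. prime p \<and> p \<le> m}"
  define W where "W d p = (\<Sum>k\<in>{1..m}. real ((m div p ^ k) div d))" for d p
  have e: "ln (fact (m div d) :: real) = (\<Sum>p\<in>S. ln (real p) * W d p)" for d
    using ln_fact_V[of "m div d" m m] unfolding S_def W_def by (simp add: V_div)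
  have e1: "ln (fact m :: real) = (\<Sum>p\<in>S. ln (real p) * W 1 p)"
    using e[of 1] by simp
  have "Lf m = (\<Sum>p\<in>S. ln (real p) * W 1 p + ln (real p) * W 30 p - ln (real p) * W 2 p - ln (real p) * W 3 p - ln (real p) * W 5 p)"
    unfolding Lf_def e e1 by (simp only: sum_subtractf sum.distrib)
  also have "\<dots> = (\<Sum>p\<in>S. ln (real p) * GG p m)"
  proof (rule sum.cong[OF refl])
    fix p
    have "GG p m = W 1 p + W 30 p - W 2 p - W 3 p - W 5 p"
      unfolding GG_def W_def gg_def by (simp only: sum_subtractf sum.distrib div_by_1)
    thus "ln (real p) * W 1 p + ln (real p) * W 30 p - ln (real p) * W 2 p - ln (real p) * W 3 p - ln (real p) * W 5 p = ln (real p) * GG p m"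
      by (simp add: right_diff_distrib distrib_left)
  qed
  finally show ?thesis unfolding S_def .
qed

lemma GG_nonneg: "GG p m \<ge> 0"
  unfolding GG_def using gg_bounds by (intro sum_nonneg) auto

lemma theta_diff_le_Lf:
  assumes "m \<ge> 1"
  shows "theta (real m) - theta (real m / 6) \<le> Lf m"
proof -
  have "theta (real m) - theta (real m / 6) = (\<Sum>p | prime p \<and> real m / 6 < real p \<and> real p \<le> real m. ln (real p))"
    by (rule theta_diff) simp
  also have "\<dots> \<le> (\<Sum>p | prime p \<and> real m / 6 < real p \<and> real p \<le> real m. ln (real p) * GG p m)"
  proof (rule sum_mono)
    fix p assume "p \<in> {p. prime p \<and> real m / 6 < real p \<and> real p \<le> real m}"
    hence p: "prime p" "m < 6 * p" "p \<le> m" by auto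
    have "1 \<le> m div p" using p prime_gt_0_nat[of p] by (metis div_greater_zero_iff One_nat_def Suc_leI)
    moreover have "m div p \<le> 5" using less_mult_imp_div_less[of m 6 p] p by simp
    ultimately have "gg (m div p) = 1" by (rule gg_one)
    moreover have "gg (m div p ^ 1) \<le> GG p m" unfolding GG_def
      using gg_bounds assms by (intro member_le_sum) auto
    ultimately have "1 \<le> GG p m" by simp
    thus "ln (real p) \<le> ln (real p) * GG p m" using p ln_prime_nonneg[of p]
      by (metis mult.right_neutral mult_left_mono)
  qed
  also have "\<dots> \<le> (\<Sum>p | prime p \<and> p \<le> m. ln (real p) * GG p m)"
    by (rule sum_mono2) (auto intro!: mult_nonneg_nonneg GG_nonneg ln_prime_nonneg)
  also have "\<dots> = Lf m" using Lf_eq[OF assms] by simp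
  finally show ?thesis .
qed


lemma GG_le_card: "GG p m \<le> real (card {k\<in>{1..m}. p ^ k \<le> m})"
proof -
  have "GG p m \<le> (\<Sum>k\<in>{1..m}. (if p ^ k \<le> m then 1 else 0))"
    unfolding GG_def
  proof (rule sum_mono)
    fix k assume "k \<in> {1..m}"
    show "gg (m div p ^ k) \<le> (if p ^ k \<le> m then 1 else 0)"
      using gg_bounds[of "m div p ^ k"] by (auto simp: gg_zero div_eq_0_iff)
  qed
  also have "\<dots> = real (card {k\<in>{1..m}. p ^ k \<le> m})"
    by (simp add: sum.If_cases Int_def)
  finally show ?thesis .
qed

lemma card_le_1: "card {k\<in>{1..m}. (p::nat) ^ k \<le> m} \<le> 1" if "m < p * p"
proof -
  have "{k\<in>{1..m}. p ^ k \<le> m} \<subseteq> {1}"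
  proof
    fix k assume k: "k \<in> {k\<in>{1..m}. p ^ k \<le> m}"
    show "k \<in> {1}"
    proof (rule ccontr)
      assume "k \<notin> {1}"
      hence "2 \<le> k" using k by auto
      moreover have "p \<ge> 1" using that by (cases p) auto
      ultimately have "p ^ 2 \<le> p ^ k" by (intro power_increasing)
      thus False using k that by (simp add: power2_eq_square)
    qed
  qed
  from card_mono[OF _ this] show ?thesis by simp
qed

lemma real_nat_floor_le: "x \<ge> 0 \<Longrightarrow> real (nat \<lfloor>x\<rfloor>) \<le> x"
  by (simp add: of_nat_nat)

lemma card_le_log:
  assumes "prime p" "m \<ge> 1"
  shows "real (card {k\<in>{1..m}. p ^ k \<le> m}) * ln (real p) \<le> ln (real m)"
proof -
  have lp: "ln (real p) > 0" using prime_gt_1_nat[OF assms(1)] by simp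
  have "{k\<in>{1..m}. p ^ k \<le> m} \<subseteq> {1..nat \<lfloor>ln (real m) / ln (real p)\<rfloor>}"
  proof
    fix k assume k: "k \<in> {k\<in>{1..m}. p ^ k \<le> m}"
    hence "real (p ^ k) \<le> real m" by simp
    hence "real p ^ k \<le> real m" by (metis of_nat_power)
    moreover have "0 < real p ^ k" using prime_gt_0_nat[OF assms(1)] by simp
    ultimately have "ln (real p ^ k) \<le> ln (real m)" using assms(2) by (subst ln_le_cancel_iff) auto
    hence "real k * ln (real p) \<le> ln (real m)"
      using prime_gt_0_nat[OF assms(1)] by (simp add: ln_realpow)
    hence "real k \<le> ln (real m) / ln (real p)" using lp by (simp add: pos_le_divide_eq)
    hence "k \<le> nat \<lfloor>ln (real m) / ln (real p)\<rfloor>" by linarith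
    thus "k \<in> {1..nat \<lfloor>ln (real m) / ln (real p)\<rfloor>}" using k by auto
  qed
  hence "card {k\<in>{1..m}. p ^ k \<le> m} \<le> nat \<lfloor>ln (real m) / ln (real p)\<rfloor>"
    by (metis card_atLeastAtMost card_mono finite_atLeastAtMost diff_Suc_1)
  hence "real (card {k\<in>{1..m}. p ^ k \<le> m}) \<le> real (nat \<lfloor>ln (real m) / ln (real p)\<rfloor>)"
    by (simp only: of_nat_le_iff)
  also have "\<dots> \<le> ln (real m) / ln (real p)"
    using assms lp by (intro real_nat_floor_le divide_nonneg_pos) auto
  finally have "real (card {k\<in>{1..m}. p ^ k \<le> m}) \<le> ln (real m) / ln (real p)" .
  thus ?thesis using lp by (simp add: pos_le_divide_eq)
qed

lemma card_small_primes: "real (card {p::nat. prime p \<and> p * p \<le> m}) \<le> sqrt (real m)"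
proof -
  have "{p::nat. prime p \<and> p * p \<le> m} \<subseteq> {1..nat \<lfloor>sqrt (real m)\<rfloor>}"
  proof
    fix p assume p: "p \<in> {p::nat. prime p \<and> p * p \<le> m}"
    hence "real p * real p \<le> real m" by (metis mem_Collect_eq of_nat_le_iff of_nat_mult)
    hence "real p \<le> sqrt (real m)" by (metis of_nat_0_le_iff real_le_rsqrt power2_eq_square)
    hence "p \<le> nat \<lfloor>sqrt (real m)\<rfloor>" by (simp add: le_nat_floor)
    thus "p \<in> {1..nat \<lfloor>sqrt (real m)\<rfloor>}" using p prime_ge_1_nat by auto
  qed
  hence "card {p::nat. prime p \<and> p * p \<le> m} \<le> nat \<lfloor>sqrt (real m)\<rfloor>"
    by (metis card_atLeastAtMost card_mono finite_atLeastAtMost diff_Suc_1)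
  hence "real (card {p::nat. prime p \<and> p * p \<le> m}) \<le> real (nat \<lfloor>sqrt (real m)\<rfloor>)" by (simp only: of_nat_le_iff)
  also have "\<dots> \<le> sqrt (real m)" by (rule real_nat_floor_le) simp
  finally show ?thesis .
qed

lemma Lf_le_theta:
  assumes "m \<ge> 1"
  shows "Lf m \<le> theta (real m) + sqrt (real m) * ln (real m)"
proof -
  have "Lf m = (\<Sum>p | prime p \<and> p \<le> m. ln (real p) * GG p m)" by (rule Lf_eq[OF assms])
  also have "\<dots> \<le> (\<Sum>p | prime p \<and> p \<le> m. ln (real p) + (if p * p \<le> m then ln (real m) else 0))"
  proof (rule sum_mono)
    fix p assume "p \<in> {p. prime p \<and> p \<le> m}"
    hence p: "prime p" "p \<le> m" by auto
    have lp: "0 \<le> ln (real p)" by (rule ln_prime_nonneg[OF p(1)])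
    have lm: "0 \<le> ln (real m)" using assms by simp
    have gc: "ln (real p) * GG p m \<le> ln (real p) * real (card {k\<in>{1..m}. p ^ k \<le> m})"
      by (rule mult_left_mono[OF GG_le_card lp])
    show "ln (real p) * GG p m \<le> ln (real p) + (if p * p \<le> m then ln (real m) else 0)"
    proof (cases "p * p \<le> m")
      case True
      thus ?thesis using gc card_le_log[OF p(1) assms] lp by (simp add: mult.commute)
    next
      case False
      hence "real (card {k\<in>{1..m}. p ^ k \<le> m}) \<le> 1" using card_le_1[of m p] by simp
      hence "ln (real p) * real (card {k\<in>{1..m}. p ^ k \<le> m}) \<le> ln (real p)"
        using lp by (metis mult.right_neutral mult_left_mono)
      thus ?thesis using gc False by simp
    qed
  qed
  also have "\<dots> = (\<Sum>p | prime p \<and> p \<le> m. ln (real p)) + (\<Sum>p | prime p \<and> p \<le> m. (if p * p \<le> m then ln (real m) else 0))"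
    by (rule sum.distrib)
  also have "(\<Sum>p | prime p \<and> p \<le> m. ln (real p)) = theta (real m)"
    unfolding theta_def by simp
  also have "(\<Sum>p | prime p \<and> p \<le> m. (if p * p \<le> m then ln (real m) else 0))
      = real (card {p::nat. prime p \<and> p * p \<le> m}) * ln (real m)"
  proof -
    have "{p. prime p \<and> p \<le> m} \<inter> {p. p * p \<le> m} = {p::nat. prime p \<and> p * p \<le> m}"
      by (auto intro: order_trans[OF _ ] simp: ) (metis le_square order_trans)
    thus ?thesis by (simp add: sum.If_cases)
  qed
  also have "\<dots> \<le> sqrt (real m) * ln (real m)"
    using card_small_primes[of m] assms by (intro mult_right_mono) auto
  finally show ?thesis by simp
qed


definition FF :: "real \<Rightarrow> real" where "FF t = t * ln t - t"

definition A0 :: real where "A0 = ln 2 / 2 + ln 3 / 3 + ln 5 / 5 - ln 30 / 30"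

lemma ln_ge_1_minus_inv: "x > 0 \<Longrightarrow> 1 - 1 / x \<le> ln (x::real)"
  using ln_le_minus_one[of "1/x"] by (simp add: ln_div)

lemma FF_diff_le:
  assumes "0 < q" "q \<le> t"
  shows "FF t - FF q \<le> (t - q) * ln t"
proof -
  have "ln (t / q) \<le> t / q - 1" using assms by (intro ln_le_minus_one) auto
  hence "q * ln (t / q) \<le> q * (t / q - 1)" using assms by (intro mult_left_mono) auto
  hence "q * (ln t - ln q) \<le> t - q" using assms by (simp add: ln_div right_diff_distrib)
  thus ?thesis unfolding FF_def by (simp add: algebra_simps)
qed

lemma FF_diff_ge:
  assumes "0 < q" "q \<le> t"
  shows "(t - q) * ln q \<le> FF t - FF q"
proof -
  have "1 - 1 / (t / q) \<le> ln (t / q)" using assms by (intro ln_ge_1_minus_inv) auto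
  hence "t * (1 - q / t) \<le> t * ln (t / q)" using assms by (intro mult_left_mono) auto
  hence "t - q \<le> t * (ln t - ln q)" using assms by (simp add: ln_div right_diff_distrib)
  thus ?thesis unfolding FF_def by (simp add: algebra_simps)
qed

lemma FF_ge: "t \<ge> 0 \<Longrightarrow> FF t \<ge> -1"
proof (cases "t = 0")
  case False
  assume t: "t \<ge> 0"
  hence "1 - 1 / t \<le> ln t" using False by (intro ln_ge_1_minus_inv) auto
  hence "t * (1 - 1 / t) \<le> t * ln t" using t by (intro mult_left_mono) auto
  thus ?thesis using False unfolding FF_def by (simp add: algebra_simps)
qed (simp add: FF_def)

lemma FF_0 [simp]: "FF 0 = 0" by (simp add: FF_def)

lemma ln_fact_ge: "FF (real n) \<le> ln (fact n)"
proof (induction n)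
  case 0 thus ?case by simp
next
  case (Suc n)
  have "FF (real (Suc n)) - FF (real n) \<le> ln (real (Suc n))"
  proof (cases "n = 0")
    case True thus ?thesis by (simp add: FF_def)
  next
    case False
    thus ?thesis using FF_diff_le[of "real n" "real (Suc n)"] by simp
  qed
  moreover have "ln (fact (Suc n) :: real) = ln (real (Suc n)) + ln (fact n)"
    by (simp add: ln_mult)
  ultimately show ?case using Suc by linarith
qed

lemma ln_fact_le: "ln (fact n) \<le> FF (real n) + ln (real n) + 1"
proof (induction n)
  case 0 thus ?case by simp
next
  case (Suc n)
  show ?case
  proof (cases "n = 0")
    case True thus ?thesis by (simp add: FF_def)
  next
    case False
    have "FF (real n) + ln (real n) \<le> FF (real (Suc n))"
      using FF_diff_ge[of "real n" "real (Suc n)"] False by simp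
    moreover have "ln (fact (Suc n) :: real) = ln (real (Suc n)) + ln (fact n)"
      by (simp add: ln_mult)
    ultimately show ?thesis using Suc by linarith
  qed
qed

lemma FF_floor:
  assumes "m \<ge> 1" "d \<ge> 1"
  shows "FF (real m / real d) - ln (real m) \<le> FF (real (m div d))"
    and "FF (real (m div d)) \<le> FF (real m / real d) + 1"
proof -
  define t where "t = real m / real d"
  define q where "q = m div d"
  have d0: "real d > 0" using assms by simp
  have qd: "q * d \<le> m" unfolding q_def by (rule div_times_less_eq_dividend)
  have qt: "real q \<le> t" unfolding t_def using d0 qd
    by (simp add: le_divide_eq) (metis of_nat_le_iff of_nat_mult)
  have "m = q * d + m mod d" unfolding q_def by simp
  moreover have "m mod d < d" using assms by simp
  ultimately have "m < (q + 1) * d" by (metis add_less_mono1 distrib_right mult_1 add.commute)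
  hence "real m < (real q + 1) * real d" by (metis of_nat_less_iff of_nat_mult of_nat_1 of_nat_add)
  hence tq: "t < real q + 1" unfolding t_def using d0 by (simp add: divide_less_eq)
  have t0: "t \<ge> 0" unfolding t_def by simp
  have "real m / real d \<le> real m / 1" using assms by (intro divide_left_mono) auto
  hence tm: "t \<le> real m" unfolding t_def by simp
  have lm: "ln (real m) \<ge> 0" using assms by simp
  show "FF t - ln (real m) \<le> FF (real q)"
  proof (cases "q = 0")
    case True
    hence "t < 1" using tq by simp
    hence "ln t \<le> 0" using t0 by (cases "t = 0") auto
    hence "t * ln t \<le> 0" using t0 by (simp add: mult_nonneg_nonpos)
    hence "FF t \<le> 0" unfolding FF_def using t0 by simp
    thus ?thesis using True lm by simp
  next
    case False
    hence q1: "real q \<ge> 1" by simp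
    have "FF t - FF (real q) \<le> (t - real q) * ln t" using FF_diff_le[of "real q" t] q1 qt by simp
    also have "\<dots> \<le> 1 * ln t" using tq qt q1 by (intro mult_right_mono) auto
    also have "\<dots> \<le> ln (real m)" using tm q1 qt by simp
    finally show ?thesis by simp
  qed
  show "FF (real q) \<le> FF t + 1"
  proof (cases "q = 0")
    case True thus ?thesis using FF_ge[OF t0] by simp
  next
    case False
    hence "real q > 0" by simp
    have "0 \<le> (t - real q) * ln (real q)" using qt False by (intro mult_nonneg_nonneg) auto
    moreover have "(t - real q) * ln (real q) \<le> FF t - FF (real q)"
      using FF_diff_ge[of "real q" t] qt False by simp
    ultimately show ?thesis by linarith
  qed
qed

lemma FF_identity:
  assumes "m \<ge> 1"
  shows "FF (real m) + FF (real m / 30) - FF (real m / 2) - FF (real m / 3) - FF (real m / 5) = A0 * real m"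
  using assms unfolding FF_def A0_def by (simp add: ln_div algebra_simps)

lemma Lf_upper:
  assumes "m \<ge> 1"
  shows "Lf m \<le> A0 * real m + 5 * ln (real m) + 3"
proof -
  have a: "ln (fact m) \<le> FF (real m) + ln (real m) + 1" by (rule ln_fact_le)
  have b: "ln (fact (m div 30)) \<le> FF (real (m div 30)) + ln (real (m div 30)) + 1" by (rule ln_fact_le)
  have b2: "FF (real (m div 30)) \<le> FF (real m / 30) + 1" using FF_floor(2)[OF assms, of 30] by simp
  have b3: "ln (real (m div 30)) \<le> ln (real m)"
    using assms by (cases "m div 30 = 0") (auto simp: div_le_dividend)
  have c: "\<And>d::nat. d \<ge> 1 \<Longrightarrow> FF (real m / real d) - ln (real m) \<le> ln (fact (m div d))"
    using FF_floor(1)[OF assms] ln_fact_ge order_trans by blast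
  have c2: "FF (real m / 2) - ln (real m) \<le> ln (fact (m div 2))" using c[of 2] by simp
  have c3: "FF (real m / 3) - ln (real m) \<le> ln (fact (m div 3))" using c[of 3] by simp
  have c5: "FF (real m / 5) - ln (real m) \<le> ln (fact (m div 5))" using c[of 5] by simp
  show ?thesis using a b b2 b3 c2 c3 c5 FF_identity[OF assms] unfolding Lf_def by linarith
qed

lemma Lf_lower:
  assumes "m \<ge> 1"
  shows "A0 * real m - 4 * ln (real m) - 6 \<le> Lf m"
proof -
  have a: "FF (real m) \<le> ln (fact m)" by (rule ln_fact_ge)
  have b: "FF (real m / 30) - ln (real m) \<le> ln (fact (m div 30))"
    using FF_floor(1)[OF assms, of 30] ln_fact_ge[of "m div 30"] by simp
  have c: "\<And>d::nat. d \<ge> 1 \<Longrightarrow> ln (fact (m div d)) \<le> FF (real m / real d) + ln (real m) + 2"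
  proof -
    fix d :: nat assume d: "d \<ge> 1"
    have "ln (fact (m div d)) \<le> FF (real (m div d)) + ln (real (m div d)) + 1" by (rule ln_fact_le)
    moreover have "ln (real (m div d)) \<le> ln (real m)"
      using assms by (cases "m div d = 0") (auto simp: div_le_dividend)
    ultimately show "ln (fact (m div d)) \<le> FF (real m / real d) + ln (real m) + 2"
      using FF_floor(2)[OF assms d] by linarith
  qed
  have c2: "ln (fact (m div 2)) \<le> FF (real m / 2) + ln (real m) + 2" using c[of 2] by simp
  have c3: "ln (fact (m div 3)) \<le> FF (real m / 3) + ln (real m) + 2" using c[of 3] by simp
  have c5: "ln (fact (m div 5)) \<le> FF (real m / 5) + ln (real m) + 2" using c[of 5] by simp
  show ?thesis using a b c2 c3 c5 FF_identity[OF assms] unfolding Lf_def by linarith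
qed


lemma A0_nonneg: "A0 \<ge> 0"
proof -
  have "ln (30::real) = ln (2 * 3 * 5)" by simp
  also have "\<dots> = ln 2 + ln 3 + ln 5" by (simp only: ln_mult) simp_all
  finally have "ln (30::real) = ln 2 + ln 3 + ln 5" .
  moreover have "ln (2::real) \<ge> 0" "ln (3::real) \<ge> 0" "ln (5::real) \<ge> 0" by auto
  ultimately show ?thesis unfolding A0_def by linarith
qed

lemma nat_le_floor_iff: "x \<ge> 0 \<Longrightarrow> real (p::nat) \<le> x \<longleftrightarrow> p \<le> nat \<lfloor>x\<rfloor>"
proof
  assume "x \<ge> 0" "p \<le> nat \<lfloor>x\<rfloor>"
  hence "real p \<le> real (nat \<lfloor>x\<rfloor>)" by (simp only: of_nat_le_iff)
  also have "\<dots> \<le> x" using \<open>x \<ge> 0\<close> by (rule real_nat_floor_le)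
  finally show "real p \<le> x" .
qed (rule le_nat_floor)

lemma theta_cong: "(\<And>p::nat. real p \<le> x \<longleftrightarrow> real p \<le> y) \<Longrightarrow> theta x = theta y"
  unfolding theta_def by (intro sum.cong) auto

lemma theta_step:
  assumes "x \<ge> 1"
  shows "theta x - theta (x / 6) \<le> A0 * x + 5 * ln x + 3"
proof -
  define m where "m = nat \<lfloor>x\<rfloor>"
  have m1: "m \<ge> 1" unfolding m_def using assms by linarith
  have mx: "real m \<le> x" "x < real m + 1" unfolding m_def using assms by linarith+
  have "theta x = theta (real m)"
    by (rule theta_cong) (use assms in \<open>simp add: m_def nat_le_floor_iff\<close>)
  moreover have "theta (x / 6) = theta (real m / 6)"
  proof (rule theta_cong)
    fix p :: nat
    have "real p \<le> x / 6 \<longleftrightarrow> real (6 * p) \<le> x" by (simp only: of_nat_mult of_nat_numeral) linarith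
    also have "\<dots> \<longleftrightarrow> 6 * p \<le> m" unfolding m_def using assms by (intro nat_le_floor_iff) simp
    also have "\<dots> \<longleftrightarrow> real p \<le> real m / 6" by linarith
    finally show "real p \<le> x / 6 \<longleftrightarrow> real p \<le> real m / 6" .
  qed
  ultimately have "theta x - theta (x / 6) \<le> Lf m" using theta_diff_le_Lf[OF m1] by simp
  also have "\<dots> \<le> A0 * real m + 5 * ln (real m) + 3" by (rule Lf_upper[OF m1])
  also have "\<dots> \<le> A0 * x + 5 * ln x + 3"
    using mx m1 A0_nonneg by (intro add_mono mult_left_mono) auto
  finally show ?thesis .
qed

lemma theta_iter:
  "\<forall>x. 1 \<le> x \<longrightarrow> x < 6 ^ n \<longrightarrow> theta x \<le> 6/5 * A0 * x + real n * (5 * ln x + 3)"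
proof (induction n)
  case 0 thus ?case by auto
next
  case (Suc n)
  show ?case
  proof (intro allI impI)
    fix x :: real assume x: "1 \<le> x" "x < 6 ^ Suc n"
    have lx: "0 \<le> ln x" using x by simp
    have st: "theta x \<le> theta (x / 6) + A0 * x + 5 * ln x + 3" using theta_step[OF x(1)] by simp
    show "theta x \<le> 6/5 * A0 * x + real (Suc n) * (5 * ln x + 3)"
    proof (cases "x / 6 < 1")
      case True
      hence "theta (x / 6) = 0" by (intro theta_small) auto
      moreover have "A0 * x \<le> 6/5 * A0 * x" using A0_nonneg x by simp
      moreover have "5 * ln x + 3 \<le> real (Suc n) * (5 * ln x + 3)" using lx by simp
      ultimately show ?thesis using st by linarith
    next
      case False
      hence "1 \<le> x / 6" "x / 6 < 6 ^ n" using x by auto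
      hence "theta (x / 6) \<le> 6/5 * A0 * (x / 6) + real n * (5 * ln (x / 6) + 3)" using Suc by blast
      moreover have "ln (x / 6) \<le> ln x" using x by (subst ln_le_cancel_iff) auto
      hence "real n * (5 * ln (x / 6) + 3) \<le> real n * (5 * ln x + 3)" by (intro mult_left_mono) auto
      ultimately show ?thesis using st by (simp add: algebra_simps)
    qed
  qed
qed

lemma theta_upper_explicit:
  assumes "x \<ge> 1"
  shows "theta x \<le> 6/5 * A0 * x + (ln x / ln 6 + 2) * (5 * ln x + 3)"
proof -
  define n where "n = nat \<lceil>ln x / ln 6\<rceil> + 1"
  have l6: "ln (6::real) > 0" by simp
  have lx: "0 \<le> ln x" using assms by simp
  have "ln x / ln 6 < real n" unfolding n_def by linarith
  hence "ln x < real n * ln 6" using l6 by (simp add: divide_less_eq)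
  hence "x < exp (real n * ln 6)" using assms by (metis exp_less_cancel_iff exp_ln less_le_trans zero_less_one)
  also have "exp (real n * ln 6) = 6 ^ n" by (simp add: exp_of_nat_mult)
  finally have "x < 6 ^ n" .
  hence "theta x \<le> 6/5 * A0 * x + real n * (5 * ln x + 3)" using theta_iter assms by blast
  moreover have "real n \<le> ln x / ln 6 + 2" unfolding n_def using lx l6
    by (simp add: of_nat_nat) linarith
  hence "real n * (5 * ln x + 3) \<le> (ln x / ln 6 + 2) * (5 * ln x + 3)" using lx by (intro mult_right_mono) auto
  ultimately show ?thesis by linarith
qed

lemma theta_lower_explicit:
  assumes "x \<ge> 1"
  shows "A0 * (x - 1) - 4 * ln x - 6 - sqrt x * ln x \<le> theta x"
proof -
  define m where "m = nat \<lfloor>x\<rfloor>"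
  have m1: "m \<ge> 1" unfolding m_def using assms by linarith
  have mx: "real m \<le> x" "x < real m + 1" unfolding m_def using assms by linarith+
  have "theta x = theta (real m)"
    by (rule theta_cong) (use assms in \<open>simp add: m_def nat_le_floor_iff\<close>)
  have "A0 * real m - 4 * ln (real m) - 6 \<le> theta (real m) + sqrt (real m) * ln (real m)"
    using Lf_lower[OF m1] Lf_le_theta[OF m1] by linarith
  moreover have "A0 * (x - 1) \<le> A0 * real m" using mx A0_nonneg by (intro mult_left_mono) auto
  moreover have "ln (real m) \<le> ln x" using mx m1 by (subst ln_le_cancel_iff) auto
  moreover have "sqrt (real m) * ln (real m) \<le> sqrt x * ln x"
    using mx m1 \<open>ln (real m) \<le> ln x\<close> by (intro mult_mono) auto
  ultimately show ?thesis using \<open>theta x = theta (real m)\<close> by linarith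
qed

lemma theta_upper_ev: "eventually (\<lambda>x. theta x \<le> (6/5 * A0 + 1/100) * x) at_top"
proof -
  have "eventually (\<lambda>x::real. (ln x / ln 6 + 2) * (5 * ln x + 3) \<le> 1/100 * x) at_top" by real_asymp
  moreover have "eventually (\<lambda>x::real. x \<ge> 1) at_top" by (rule eventually_ge_at_top)
  ultimately show ?thesis
  proof eventually_elim
    case (elim x)
    have "(6/5 * A0 + 1/100) * x = 6/5 * A0 * x + 1/100 * x" by (simp add: algebra_simps)
    thus ?case using elim theta_upper_explicit[of x] by linarith
  qed
qed

lemma theta_lower_ev: "eventually (\<lambda>x. (A0 - 1/100) * x \<le> theta x) at_top"
proof -
  have "eventually (\<lambda>x::real. A0 + 4 * ln x + 6 + sqrt x * ln x \<le> 1/100 * x) at_top" by real_asymp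
  moreover have "eventually (\<lambda>x::real. x \<ge> 1) at_top" by (rule eventually_ge_at_top)
  ultimately show ?thesis
  proof eventually_elim
    case (elim x)
    have "(A0 - 1/100) * x = A0 * (x - 1) + A0 - 1/100 * x" by (simp add: algebra_simps)
    thus ?case using elim theta_lower_explicit[of x] by linarith
  qed
qed


lemma e_ge_27: "exp 1 \<ge> (27/10::real)"
  using e_approx_32 by (simp add: abs_if split: if_split_asm)

lemma A0_le: "A0 \<le> 14/15"
proof -
  have l30: "ln (30::real) = ln 2 + ln 3 + ln 5"
  proof -
    have "ln (30::real) = ln (2 * 3 * 5)" by simp
    also have "\<dots> = ln 2 + ln 3 + ln 5" by (simp only: ln_mult) simp_all
    finally show ?thesis .
  qed
  have m1: "ln ((2::real) ^ 14 * 3 ^ 9 * 5 ^ 5) = ln ((2::real) ^ 14 * 3 ^ 9) + ln ((5::real) ^ 5)"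
    by (rule ln_mult_pos) simp_all
  have m2: "ln ((2::real) ^ 14 * 3 ^ 9) = ln ((2::real) ^ 14) + ln ((3::real) ^ 9)"
    by (rule ln_mult_pos) simp_all
  have p1: "ln ((2::real) ^ 14) = 14 * ln 2" using ln_realpow[of "2::real" 14] by simp
  have p2: "ln ((3::real) ^ 9) = 9 * ln 3" using ln_realpow[of "3::real" 9] by simp
  have p3: "ln ((5::real) ^ 5) = 5 * ln 5" using ln_realpow[of "5::real" 5] by simp
  have eq: "ln ((2::real) ^ 14 * 3 ^ 9 * 5 ^ 5) = 14 * ln 2 + 9 * ln 3 + 5 * ln 5"
    unfolding m1 m2 p1 p2 p3 ..
  have "((2::real) ^ 14 * 3 ^ 9 * 5 ^ 5) \<le> (27/10) ^ 28" by (simp add: power_divide le_divide_eq)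
  moreover have "(27/10::real) ^ 28 \<le> exp 1 ^ 28" using e_ge_27 by (intro power_mono) auto
  moreover have "exp (1::real) ^ 28 = exp 28" by (simp add: exp_of_nat_mult[symmetric])
  ultimately have "ln ((2::real) ^ 14 * 3 ^ 9 * 5 ^ 5) \<le> ln (exp 28)"
    by (subst ln_le_cancel_iff) auto
  hence "ln ((2::real) ^ 14 * 3 ^ 9 * 5 ^ 5) \<le> 28" by (simp only: ln_exp)
  hence "14 * ln 2 + 9 * ln 3 + 5 * ln (5::real) \<le> 28" using eq by linarith
  thus ?thesis unfolding A0_def l30 by (simp add: field_simps)
qed

lemma finite_prime_interval: "finite {p::nat. prime p \<and> Y < real p \<and> real p \<le> Z}"
  by (rule finite_subset[OF _ finite_primes_le[of Z]]) auto

lemma sum_lnp_le_theta: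
  assumes "0 < Y" "Y \<le> Z"
  shows "(\<Sum>p | prime p \<and> Y < real p \<and> real p \<le> Z. ln (real p) / real p) \<le> (theta Z - theta Y) / Y"
proof -
  have "(\<Sum>p | prime p \<and> Y < real p \<and> real p \<le> Z. ln (real p) / real p)
      \<le> (\<Sum>p | prime p \<and> Y < real p \<and> real p \<le> Z. ln (real p) / Y)"
  proof (rule sum_mono)
    fix p assume "p \<in> {p. prime p \<and> Y < real p \<and> real p \<le> Z}"
    hence p: "prime p" "Y < real p" by auto
    show "ln (real p) / real p \<le> ln (real p) / Y"
      using p assms ln_prime_nonneg[OF p(1)] by (intro divide_left_mono) auto
  qed
  also have "\<dots> = (theta Z - theta Y) / Y"
    by (simp add: theta_diff[OF assms(2)] sum_divide_distrib)
  finally show ?thesis .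
qed

lemma split_interval:
  assumes "Y \<le> R" "R \<le> Z"
  shows "(\<Sum>p | prime p \<and> Y < real p \<and> real p \<le> Z. f p) =
         (\<Sum>p | prime p \<and> Y < real p \<and> real p \<le> R. f p) + (\<Sum>p | prime p \<and> R < real p \<and> real p \<le> Z. f p)"
proof -
  have "{p. prime p \<and> Y < real p \<and> real p \<le> Z} =
        {p. prime p \<and> Y < real p \<and> real p \<le> R} \<union> {p. prime p \<and> R < real p \<and> real p \<le> Z}"
    using assms by auto
  thus ?thesis
    by (simp only:) (rule sum.union_disjoint[OF finite_prime_interval finite_prime_interval], auto)
qed

lemma mertens_interval:
  "eventually (\<lambda>Y. (\<Sum>p | prime p \<and> Y < real p \<and> real p \<le> exp 1 * Y. ln (real p) / real p) \<le> 17/10) at_top"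
proof -
  define U where "U = 6/5 * A0 + 1/100"
  define Lw where "Lw = A0 - 1/100"
  obtain X1 where X1: "\<And>x. x \<ge> X1 \<Longrightarrow> theta x \<le> U * x"
    using theta_upper_ev unfolding U_def eventually_at_top_linorder by blast
  obtain X2 where X2: "\<And>x. x \<ge> X2 \<Longrightarrow> Lw * x \<le> theta x"
    using theta_lower_ev unfolding Lw_def eventually_at_top_linorder by blast
  show ?thesis unfolding eventually_at_top_linorder
  proof (intro exI[of _ "max 1 (max X1 X2)"] allI impI)
    fix Y :: real assume Y: "Y \<ge> max 1 (max X1 X2)"
    define r :: real where "r = 5/3"
    have e1: "exp 1 \<le> (272/100::real)" using e_less_272 by simp
    have e2: "r \<le> exp 1" using e_ge_27 unfolding r_def by simp
    have Y0: "Y > 0" "Y \<ge> 1" using Y by auto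
    have h1: "theta (r * Y) \<le> U * (r * Y)" using Y X1[of "r * Y"] unfolding r_def by auto
    have h2: "theta (exp 1 * Y) \<le> U * (exp 1 * Y)"
    proof (rule X1)
      have "Y \<le> exp 1 * Y" using Y0 by simp
      thus "X1 \<le> exp 1 * Y" using Y by linarith
    qed
    have h3: "Lw * Y \<le> theta Y" using Y X2 by auto
    have S1: "(\<Sum>p | prime p \<and> Y < real p \<and> real p \<le> r * Y. ln (real p) / real p) \<le> (theta (r * Y) - theta Y) / Y"
      using Y0 unfolding r_def by (intro sum_lnp_le_theta) auto
    have S2: "(\<Sum>p | prime p \<and> r * Y < real p \<and> real p \<le> exp 1 * Y. ln (real p) / real p) \<le> (theta (exp 1 * Y) - theta (r * Y)) / (r * Y)"
      using Y0 e2 unfolding r_def by (intro sum_lnp_le_theta) auto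
    have sp: "(\<Sum>p | prime p \<and> Y < real p \<and> real p \<le> exp 1 * Y. ln (real p) / real p) =
        (\<Sum>p | prime p \<and> Y < real p \<and> real p \<le> r * Y. ln (real p) / real p) +
        (\<Sum>p | prime p \<and> r * Y < real p \<and> real p \<le> exp 1 * Y. ln (real p) / real p)"
      using Y0 e2 unfolding r_def by (intro split_interval) auto
    define a where "a = theta Y / Y"
    define b where "b = theta (r * Y) / Y"
    define c where "c = theta (exp 1 * Y) / Y"
    have ab: "(theta (r * Y) - theta Y) / Y = b - a" unfolding a_def b_def by (simp add: diff_divide_distrib)
    have cb: "(theta (exp 1 * Y) - theta (r * Y)) / (r * Y) = (c - b) * (3/5)"
      unfolding b_def c_def r_def using Y0 by (simp add: field_simps)
    have hb: "b \<le> U * r" using h1 Y0 unfolding b_def by (simp add: divide_le_eq mult.commute mult.left_commute)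
    have hc: "c \<le> U * exp 1" using h2 Y0 unfolding c_def by (simp add: divide_le_eq mult.commute mult.left_commute)
    have ha: "Lw \<le> a" using h3 Y0 unfolding a_def by (simp add: le_divide_eq)
    have U0: "U \<ge> 0" unfolding U_def using A0_nonneg by simp
    have Ue: "U * exp 1 \<le> U * (272/100)" using U0 e1 by (intro mult_left_mono) auto
    have "(\<Sum>p | prime p \<and> Y < real p \<and> real p \<le> exp 1 * Y. ln (real p) / real p) \<le> b - a + (c - b) * (3/5)"
      using sp S1 S2 ab cb by linarith
    also have "\<dots> = 2/5 * b + 3/5 * c - a" by (simp add: field_simps)
    also have "\<dots> \<le> 2/5 * (U * (5/3)) + 3/5 * (U * (272/100)) - Lw"
      using hb hc ha Ue unfolding r_def by linarith
    also have "\<dots> \<le> 17/10" using A0_le A0_nonneg unfolding U_def Lw_def by (simp add: algebra_simps)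
    finally show "(\<Sum>p | prime p \<and> Y < real p \<and> real p \<le> exp 1 * Y. ln (real p) / real p) \<le> 17/10" .
  qed
qed

lemma mertens_interval_inv:
  "eventually (\<lambda>Y. \<forall>Z. Y \<le> Z \<longrightarrow> (\<Sum>p | prime p \<and> Z < real p \<and> real p \<le> exp 1 * Z. 1 / real p) \<le> 17/10 / ln Z) at_top"
proof -
  obtain X where X: "\<And>Y. Y \<ge> X \<Longrightarrow> (\<Sum>p | prime p \<and> Y < real p \<and> real p \<le> exp 1 * Y. ln (real p) / real p) \<le> 17/10"
    using mertens_interval unfolding eventually_at_top_linorder by blast
  show ?thesis unfolding eventually_at_top_linorder
  proof (intro exI[of _ "max 2 X"] allI impI)
    fix Y Z :: real assume Y: "Y \<ge> max 2 X" and YZ: "Y \<le> Z"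
    have lZ: "ln Z > 0" using Y YZ by simp
    have "(\<Sum>p | prime p \<and> Z < real p \<and> real p \<le> exp 1 * Z. 1 / real p)
        \<le> (\<Sum>p | prime p \<and> Z < real p \<and> real p \<le> exp 1 * Z. (ln (real p) / real p) / ln Z)"
    proof (rule sum_mono)
      fix p assume "p \<in> {p. prime p \<and> Z < real p \<and> real p \<le> exp 1 * Z}"
      hence p: "prime p" "Z < real p" by auto
      have "ln Z \<le> ln (real p)" using p Y YZ by (subst ln_le_cancel_iff) auto
      hence "1 * ln Z \<le> ln (real p)" by simp
      hence "1 \<le> ln (real p) / ln Z" using lZ by (simp add: le_divide_eq)
      hence "1 / real p \<le> (ln (real p) / ln Z) / real p" using p prime_gt_0_nat[OF p(1)]
        by (intro divide_right_mono) auto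
      thus "1 / real p \<le> (ln (real p) / real p) / ln Z" by (simp add: mult.commute)
    qed
    also have "\<dots> = (\<Sum>p | prime p \<and> Z < real p \<and> real p \<le> exp 1 * Z. ln (real p) / real p) / ln Z"
      by (simp add: sum_divide_distrib)
    also have "\<dots> \<le> 17/10 / ln Z" using X[of Z] Y YZ lZ by (intro divide_right_mono) auto
    finally show "(\<Sum>p | prime p \<and> Z < real p \<and> real p \<le> exp 1 * Z. 1 / real p) \<le> 17/10 / ln Z" .
  qed
qed


lemma PP_primes: "p \<in> PP gam N \<Longrightarrow> prime p"
  by (simp add: PP_def)

lemma finite_PP: "finite (PP gam N)"
proof (rule finite_subset[of _ "{..nat \<lceil>exp (ln (ln N) powr gam) * ln N * ln (ln N)\<rceil>}"])
  show "PP gam N \<subseteq> {..nat \<lceil>exp (ln (ln N) powr gam) * ln N * ln (ln N)\<rceil>}"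
  proof
    fix p assume "p \<in> PP gam N"
    hence "real p \<le> exp (ln (ln N) powr gam) * ln N * ln (ln N)" by (simp add: PP_def)
    hence "real p \<le> real (nat \<lceil>exp (ln (ln N) powr gam) * ln N * ln (ln N)\<rceil>)" by linarith
    thus "p \<in> {..nat \<lceil>exp (ln (ln N) powr gam) * ln N * ln (ln N)\<rceil>}" by simp
  qed
qed auto

lemma prime_factors_prod_primes:
  assumes "finite T" "\<And>p. p \<in> T \<Longrightarrow> prime (p::nat)"
  shows "prime_factors (\<Prod>T) = T"
proof -
  have "prime_factors (\<Prod>T) = \<Union>((prime_factors \<circ> (\<lambda>x. x)) ` T)"
    using assms by (intro prime_factors_prod) (auto dest: prime_gt_0_nat)
  also have "\<dots> = T" using assms by (auto simp: prime_prime_factors)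
  finally show ?thesis .
qed

lemma squarefree_prod_primes:
  assumes "finite T" "\<And>p. p \<in> T \<Longrightarrow> prime (p::nat)"
  shows "squarefree (\<Prod>T)"
  using assms
  by (intro squarefree_prod_coprime) (auto intro: primes_coprime squarefree_prime)

lemma prod_primes_pos: "(\<And>p. p \<in> T \<Longrightarrow> prime (p::nat)) \<Longrightarrow> \<Prod>T \<ge> 1"
  by (metis One_nat_def Suc_leI prime_gt_0_nat prod_pos)

lemma squarefree_eq_prod:
  assumes "squarefree (n::nat)" "n \<ge> 1"
  shows "n = \<Prod>(prime_factors n)"
proof -
  have "n = (\<Prod>p\<in>prime_factors n. p ^ multiplicity p n)"
    using prod_prime_factors[of n] assms by simp
  also have "\<dots> = (\<Prod>p\<in>prime_factors n. p)"
  proof (rule prod.cong[OF refl])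
    fix p assume p: "p \<in> prime_factors n"
    have "multiplicity p n \<le> 1" using assms squarefree_factorial_semiring''[of n] p
      by (auto simp: prime_factors_multiplicity)
    moreover have "multiplicity p n \<ge> 1" using p by (auto simp: prime_factors_multiplicity)
    ultimately have "multiplicity p n = 1" by simp
    thus "p ^ multiplicity p n = p" by simp
  qed
  finally show ?thesis by simp
qed

lemma suppf_image: "suppf gam N = (\<lambda>T. \<Prod>T) ` Pow (PP gam N)"
proof
  show "suppf gam N \<subseteq> (\<lambda>T. \<Prod>T) ` Pow (PP gam N)"
  proof
    fix n assume "n \<in> suppf gam N"
    hence n: "n \<ge> 1" "squarefree n" "prime_factors n \<subseteq> PP gam N" by (auto simp: suppf_def)
    hence "n = \<Prod>(prime_factors n)" by (intro squarefree_eq_prod)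
    thus "n \<in> (\<lambda>T. \<Prod>T) ` Pow (PP gam N)" using n by blast
  qed
  show "(\<lambda>T. \<Prod>T) ` Pow (PP gam N) \<subseteq> suppf gam N"
  proof
    fix n assume "n \<in> (\<lambda>T. \<Prod>T) ` Pow (PP gam N)"
    then obtain T where T: "T \<subseteq> PP gam N" "n = \<Prod>T" by auto
    have fT: "finite T" using T finite_PP finite_subset by blast
    have pT: "\<And>p. p \<in> T \<Longrightarrow> prime p" using T PP_primes by blast
    have P1: "\<Prod>T \<ge> 1" by (rule prod_primes_pos) (use pT in auto)
    show "n \<in> suppf gam N" unfolding suppf_def using T fT pT P1
      by (auto simp: prime_factors_prod_primes squarefree_prod_primes)
  qed
qed

lemma inj_prod_PP: "inj_on (\<lambda>T. \<Prod>T) (Pow (PP gam N))"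
proof (rule inj_onI)
  fix A B assume A: "A \<in> Pow (PP gam N)" and B: "B \<in> Pow (PP gam N)" and eq: "\<Prod>A = \<Prod>B"
  have "A = prime_factors (\<Prod>A)" using A finite_PP[of gam N]
    by (subst prime_factors_prod_primes) (auto intro: finite_subset PP_primes)
  also have "\<dots> = prime_factors (\<Prod>B)" using eq by simp
  also have "\<dots> = B" using B finite_PP[of gam N]
    by (subst prime_factors_prod_primes) (auto intro: finite_subset PP_primes)
  finally show "A = B" .
qed

lemma ff_prod:
  assumes "T \<subseteq> PP gam N"
  shows "ff AA gam N (\<Prod>T) = (\<Prod>p\<in>T. fp AA N p)"
proof -
  have fT: "finite T" using assms finite_PP finite_subset by blast
  have pT: "\<And>p. p \<in> T \<Longrightarrow> prime p" using assms PP_primes by blast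
  have "\<Prod>T \<in> suppf gam N" using assms suppf_image by blast
  thus ?thesis unfolding ff_def using prime_factors_prod_primes[OF fT pT] by simp
qed

lemma hh_prod:
  assumes "T \<subseteq> PP gam N"
  shows "hh (\<Prod>T) = (\<Prod>p\<in>T. real p / (real p + 1))"
proof -
  have fT: "finite T" using assms finite_PP finite_subset by blast
  have pT: "\<And>p. p \<in> T \<Longrightarrow> prime p" using assms PP_primes by blast
  show ?thesis unfolding hh_def using prime_factors_prod_primes[OF fT pT] by simp
qed

lemma divisors_prod:
  assumes "T \<subseteq> PP gam N"
  shows "{q. q dvd \<Prod>T} = (\<lambda>U. \<Prod>U) ` Pow T"
proof
  have fT: "finite T" using assms finite_PP finite_subset by blast
  have pT: "\<And>p. p \<in> T \<Longrightarrow> prime p" using assms PP_primes by blast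
  show "{q. q dvd \<Prod>T} \<subseteq> (\<lambda>U. \<Prod>U) ` Pow T"
  proof
    fix q assume "q \<in> {q. q dvd \<Prod>T}"
    hence q: "q dvd \<Prod>T" by simp
    have sq: "squarefree q" using squarefree_mono[OF q squarefree_prod_primes[OF fT pT]] .
    have P1: "\<Prod>T \<ge> 1" by (rule prod_primes_pos) (use pT in auto)
    have q1: "q \<ge> 1" using q P1
      by (metis One_nat_def Suc_leI dvd_0_left_iff gr0I not_one_le_zero)
    have "prime_factors q \<subseteq> prime_factors (\<Prod>T)" using q q1 P1
      by (intro dvd_prime_factors) auto
    hence "prime_factors q \<subseteq> T" using prime_factors_prod_primes[OF fT pT] by simp
    moreover have "q = \<Prod>(prime_factors q)" using sq q1 by (rule squarefree_eq_prod)
    ultimately show "q \<in> (\<lambda>U. \<Prod>U) ` Pow T" by blast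
  qed
  show "(\<lambda>U. \<Prod>U) ` Pow T \<subseteq> {q. q dvd \<Prod>T}"
    using fT by (auto intro: prod_dvd_prod_subset)
qed

definition tt :: "real \<Rightarrow> real \<Rightarrow> nat \<Rightarrow> real" where
  "tt AA N p = fp AA N p * (real p / (real p + 1)) / real p powr sig AA N * (1 + fp AA N p * real p powr sig AA N)"

lemma term_prod:
  assumes "T \<subseteq> PP gam N"
  shows "term_n AA gam N (\<Prod>T) = (\<Prod>p\<in>T. tt AA N p)"
proof -
  have fT: "finite T" using assms finite_PP finite_subset by blast
  have pT: "\<And>p. p \<in> T \<Longrightarrow> prime p" using assms PP_primes by blast
  define s where "s = sig AA N"
  have inj: "inj_on (\<lambda>U. \<Prod>U) (Pow T)"
    by (rule inj_on_subset[OF inj_prod_PP[of gam N]]) (use assms in auto)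
  have "(\<Sum>q\<in>{q. q dvd \<Prod>T}. ff AA gam N q * real q powr s)
      = (\<Sum>U\<in>Pow T. ff AA gam N (\<Prod>U) * real (\<Prod>U) powr s)"
    unfolding divisors_prod[OF assms] by (rule sum.reindex[OF inj, unfolded comp_def])
  also have "\<dots> = (\<Sum>U\<in>Pow T. (\<Prod>p\<in>U. fp AA N p * real p powr s))"
  proof (rule sum.cong[OF refl])
    fix U assume "U \<in> Pow T"
    hence U: "U \<subseteq> PP gam N" using assms by auto
    show "ff AA gam N (\<Prod>U) * real (\<Prod>U) powr s = (\<Prod>p\<in>U. fp AA N p * real p powr s)"
      unfolding ff_prod[OF U] by (simp add: prod_powr_distrib prod.distrib)
  qed
  also have "\<dots> = (\<Prod>p\<in>T. fp AA N p * real p powr s + 1)"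
    by (subst prod_add[OF fT]) simp
  finally have d: "(\<Sum>q\<in>{q. q dvd \<Prod>T}. ff AA gam N q * real q powr s) = (\<Prod>p\<in>T. 1 + fp AA N p * real p powr s)"
    by (simp add: add.commute)
  have "term_n AA gam N (\<Prod>T) = (\<Prod>p\<in>T. fp AA N p) * (\<Prod>p\<in>T. real p / (real p + 1)) / (\<Prod>p\<in>T. real p powr s)
        * (\<Prod>p\<in>T. 1 + fp AA N p * real p powr s)"
    unfolding term_n_def s_def[symmetric] d ff_prod[OF assms] hh_prod[OF assms]
    by (simp add: prod_powr_distrib)
  also have "\<dots> = (\<Prod>p\<in>T. tt AA N p)"
    unfolding tt_def s_def[symmetric] by (simp add: prod.distrib prod_dividef)
  finally show ?thesis .
qed


lemma finite_suppf: "finite (suppf gam N)"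
  unfolding suppf_image using finite_PP by simp

lemma ff_zero: "n \<notin> suppf gam N \<Longrightarrow> ff AA gam N n = 0"
  by (simp add: ff_def)

lemma term_zero: "n \<notin> suppf gam N \<Longrightarrow> term_n AA gam N n = 0"
  by (simp add: term_n_def ff_zero)

lemma suppf_ge1: "n \<in> suppf gam N \<Longrightarrow> n \<ge> 1"
  by (simp add: suppf_def)

lemma sum_suppf_reindex:
  "(\<Sum>n\<in>suppf gam N. g n) = (\<Sum>T\<in>Pow (PP gam N). g (\<Prod>T))"
  unfolding suppf_image by (rule sum.reindex[OF inj_prod_PP, unfolded comp_def])

lemma total_sum:
  "(\<Sum>n\<in>suppf gam N. term_n AA gam N n) = (\<Prod>p\<in>PP gam N. 1 + tt AA N p)"
proof -
  have "(\<Sum>n\<in>suppf gam N. term_n AA gam N n) = (\<Sum>T\<in>Pow (PP gam N). \<Prod>p\<in>T. tt AA N p)"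
    unfolding sum_suppf_reindex by (intro sum.cong refl) (auto simp: term_prod)
  also have "\<dots> = (\<Prod>p\<in>PP gam N. tt AA N p + 1)"
    by (subst prod_add[OF finite_PP]) simp
  finally show ?thesis by (simp add: add.commute)
qed

lemma infsum_total:
  "(\<Sum>\<^sub>\<infinity>n\<in>{n. n \<ge> 1}. term_n AA gam N n) = (\<Sum>n\<in>suppf gam N. term_n AA gam N n)"
proof -
  have "(\<Sum>\<^sub>\<infinity>n\<in>{n. n \<ge> 1}. term_n AA gam N n) = (\<Sum>\<^sub>\<infinity>n\<in>suppf gam N. term_n AA gam N n)"
    by (rule infsum_cong_neutral) (auto simp: term_zero dest: suppf_ge1)
  thus ?thesis using finite_suppf by simp
qed

definition Eset :: "real \<Rightarrow> real \<Rightarrow> real \<Rightarrow> real \<Rightarrow> nat set set" where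
  "Eset AA gam a N = {T\<in>Pow (PP gam N). \<exists>k\<in>{1..nat \<lfloor>ln (ln N) powr gam\<rfloor>}. Delta AA a N k \<le> real (card (T \<inter> Pk N k))}"

lemma infsum_num:
  "(\<Sum>\<^sub>\<infinity>n\<in>{n. n \<ge> 1 \<and> n \<notin> MM AA gam a N}. term_n AA gam N n) = (\<Sum>T\<in>Eset AA gam a N. \<Prod>p\<in>T. tt AA N p)"
proof -
  define E where "E = suppf gam N - MM AA gam a N"
  have "(\<Sum>\<^sub>\<infinity>n\<in>{n. n \<ge> 1 \<and> n \<notin> MM AA gam a N}. term_n AA gam N n) = (\<Sum>\<^sub>\<infinity>n\<in>E. term_n AA gam N n)"
    by (rule infsum_cong_neutral) (auto simp: E_def term_zero dest: suppf_ge1)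
  also have "\<dots> = (\<Sum>n\<in>E. term_n AA gam N n)"
    using finite_suppf[of gam N] unfolding E_def by simp
  also have "E = (\<lambda>T. \<Prod>T) ` Eset AA gam a N"
  proof -
    have "E = {n \<in> suppf gam N. \<exists>k\<in>{1..nat \<lfloor>ln (ln N) powr gam\<rfloor>}. n \<in> Mk AA gam a N k}"
      unfolding E_def MM_def by auto
    also have "\<dots> = (\<lambda>T. \<Prod>T) ` Eset AA gam a N"
    proof -
      have pf: "prime_factors (\<Prod>T) = T" if "T \<in> Pow (PP gam N)" for T
        using that finite_PP[of gam N]
        by (intro prime_factors_prod_primes) (auto intro: finite_subset PP_primes)
      show ?thesis
      proof
        show "{n \<in> suppf gam N. \<exists>k\<in>{1..nat \<lfloor>ln (ln N) powr gam\<rfloor>}. n \<in> Mk AA gam a N k} \<subseteq> (\<lambda>T. \<Prod>T) ` Eset AA gam a N"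
        proof
          fix n assume n: "n \<in> {n \<in> suppf gam N. \<exists>k\<in>{1..nat \<lfloor>ln (ln N) powr gam\<rfloor>}. n \<in> Mk AA gam a N k}"
          then obtain T where T: "T \<in> Pow (PP gam N)" "n = \<Prod>T" using suppf_image[of gam N] by auto
          from n obtain k where k: "k \<in> {1..nat \<lfloor>ln (ln N) powr gam\<rfloor>}" "n \<in> Mk AA gam a N k" by auto
          have "Delta AA a N k \<le> real (card (T \<inter> Pk N k))" using k T pf[OF T(1)] by (simp add: Mk_def)
          hence "T \<in> Eset AA gam a N" using T k unfolding Eset_def by auto
          thus "n \<in> (\<lambda>T. \<Prod>T) ` Eset AA gam a N" using T by auto
        qed
        show "(\<lambda>T. \<Prod>T) ` Eset AA gam a N \<subseteq> {n \<in> suppf gam N. \<exists>k\<in>{1..nat \<lfloor>ln (ln N) powr gam\<rfloor>}. n \<in> Mk AA gam a N k}"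
        proof
          fix n assume "n \<in> (\<lambda>T. \<Prod>T) ` Eset AA gam a N"
          then obtain T where T: "T \<in> Eset AA gam a N" "n = \<Prod>T" by auto
          hence TP: "T \<in> Pow (PP gam N)" by (simp add: Eset_def)
          hence ns: "n \<in> suppf gam N" using T suppf_image[of gam N] by auto
          from T obtain k where k: "k \<in> {1..nat \<lfloor>ln (ln N) powr gam\<rfloor>}" "Delta AA a N k \<le> real (card (T \<inter> Pk N k))"
            unfolding Eset_def by auto
          have "n \<in> Mk AA gam a N k" using k ns T pf[OF TP] by (simp add: Mk_def)
          thus "n \<in> {n \<in> suppf gam N. \<exists>k\<in>{1..nat \<lfloor>ln (ln N) powr gam\<rfloor>}. n \<in> Mk AA gam a N k}"
            using ns k by auto
        qed
      qed
    qed
    finally show ?thesis .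
  qed
  also have "(\<Sum>n\<in>(\<lambda>T. \<Prod>T) ` Eset AA gam a N. term_n AA gam N n) = (\<Sum>T\<in>Eset AA gam a N. term_n AA gam N (\<Prod>T))"
    by (rule sum.reindex[unfolded comp_def]) (rule inj_on_subset[OF inj_prod_PP], auto simp: Eset_def)
  also have "\<dots> = (\<Sum>T\<in>Eset AA gam a N. \<Prod>p\<in>T. tt AA N p)"
    by (intro sum.cong refl) (auto simp: term_prod Eset_def)
  finally show ?thesis .
qed

lemma union_bound:
  fixes f :: "'a \<Rightarrow> real"
  assumes "finite A" "finite K" "\<And>x. x \<in> A \<Longrightarrow> f x \<ge> 0"
  shows "(\<Sum>x\<in>{x\<in>A. \<exists>k\<in>K. P k x}. f x) \<le> (\<Sum>k\<in>K. \<Sum>x\<in>{x\<in>A. P k x}. f x)"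
proof -
  have "(\<Sum>x\<in>{x\<in>A. \<exists>k\<in>K. P k x}. f x) \<le> (\<Sum>x\<in>{x\<in>A. \<exists>k\<in>K. P k x}. \<Sum>k\<in>K. if P k x then f x else 0)"
  proof (rule sum_mono)
    fix x assume x: "x \<in> {x\<in>A. \<exists>k\<in>K. P k x}"
    then obtain k where k: "k \<in> K" "P k x" by auto
    have "f x = (if P k x then f x else 0)" using k by simp
    also have "\<dots> \<le> (\<Sum>k\<in>K. if P k x then f x else 0)"
      using k assms x by (intro member_le_sum) auto
    finally show "f x \<le> (\<Sum>k\<in>K. if P k x then f x else 0)" .
  qed
  also have "\<dots> \<le> (\<Sum>x\<in>A. \<Sum>k\<in>K. if P k x then f x else 0)"
    using assms by (intro sum_mono2) (auto intro!: sum_nonneg)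
  also have "\<dots> = (\<Sum>k\<in>K. \<Sum>x\<in>A. if P k x then f x else 0)" by (rule sum.swap)
  also have "\<dots> = (\<Sum>k\<in>K. \<Sum>x\<in>{x\<in>A. P k x}. f x)"
    using assms by (simp add: sum.inter_filter)
  finally show ?thesis .
qed

lemma factor_bound:
  fixes t w :: real
  assumes "t \<ge> 0" "w \<ge> 1"
  shows "1 + t * w \<le> (1 + t) * exp ((w - 1) * t)"
proof -
  have e: "(1 + t) * (1 + (w - 1) * t) = 1 + t * w + (w - 1) * t * t" by (simp add: algebra_simps)
  have "(w - 1) * t * t \<ge> 0" using assms by simp
  hence "1 + t * w \<le> (1 + t) * (1 + (w - 1) * t)" using e by linarith
  also have "\<dots> \<le> (1 + t) * exp ((w - 1) * t)"
    using assms by (intro mult_left_mono) (auto simp: exp_ge_add_one_self_aux add.commute)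
  finally show ?thesis .
qed

lemma chernoff:
  fixes t :: "'a \<Rightarrow> real"
  assumes S: "finite S" and t: "\<And>p. p \<in> S \<Longrightarrow> t p \<ge> 0" and lam: "lam \<ge> 0"
  shows "(\<Sum>T\<in>{T\<in>Pow S. D \<le> real (card (T \<inter> Q))}. \<Prod>p\<in>T. t p)
         \<le> exp (- lam * D + (exp lam - 1) * (\<Sum>p\<in>S \<inter> Q. t p)) * (\<Prod>p\<in>S. 1 + t p)"
proof -
  define w where "w p = (if p \<in> Q then exp lam else 1)" for p
  have w1: "w p \<ge> 1" for p using lam by (simp add: w_def)
  have prodw: "(\<Prod>p\<in>T. w p) = exp (lam * real (card (T \<inter> Q)))" if "T \<subseteq> S" for T
  proof -
    have fT: "finite T" using that S finite_subset by blast
    have "(\<Prod>p\<in>T. w p) = (\<Prod>p\<in>T \<inter> Q. exp lam)"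
      unfolding w_def using fT by (simp add: prod.If_cases)
    also have "\<dots> = exp lam ^ card (T \<inter> Q)" by simp
    also have "\<dots> = exp (lam * real (card (T \<inter> Q)))" by (simp add: exp_of_nat_mult[symmetric] mult.commute)
    finally show ?thesis .
  qed
  have nn: "(\<Prod>p\<in>T. t p) \<ge> 0" if "T \<in> Pow S" for T using that t by (intro prod_nonneg) auto
  have "(\<Sum>T\<in>{T\<in>Pow S. D \<le> real (card (T \<inter> Q))}. \<Prod>p\<in>T. t p)
      \<le> (\<Sum>T\<in>{T\<in>Pow S. D \<le> real (card (T \<inter> Q))}. (\<Prod>p\<in>T. t p) * exp (lam * (real (card (T \<inter> Q)) - D)))"
  proof (rule sum_mono)
    fix T assume T: "T \<in> {T\<in>Pow S. D \<le> real (card (T \<inter> Q))}"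
    have "1 \<le> exp (lam * (real (card (T \<inter> Q)) - D))" using T lam by auto
    thus "(\<Prod>p\<in>T. t p) \<le> (\<Prod>p\<in>T. t p) * exp (lam * (real (card (T \<inter> Q)) - D))"
      using nn[of T] T by (metis (no_types, lifting) mem_Collect_eq mult.right_neutral mult_left_mono)
  qed
  also have "\<dots> \<le> (\<Sum>T\<in>Pow S. (\<Prod>p\<in>T. t p) * exp (lam * (real (card (T \<inter> Q)) - D)))"
    using S nn by (intro sum_mono2) auto
  also have "\<dots> = exp (- lam * D) * (\<Sum>T\<in>Pow S. \<Prod>p\<in>T. t p * w p)"
  proof -
    have "(\<Prod>p\<in>T. t p) * exp (lam * (real (card (T \<inter> Q)) - D)) = exp (- lam * D) * (\<Prod>p\<in>T. t p * w p)"
      if "T \<in> Pow S" for T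
      using that prodw[of T] by (simp add: prod.distrib right_diff_distrib exp_diff exp_minus field_simps)
    thus ?thesis by (simp add: sum_distrib_left)
  qed
  also have "(\<Sum>T\<in>Pow S. \<Prod>p\<in>T. t p * w p) = (\<Prod>p\<in>S. 1 + t p * w p)"
  proof -
    have "(\<Prod>p\<in>S. t p * w p + 1) = (\<Sum>X\<in>Pow S. (\<Prod>p\<in>X. t p * w p) * (\<Prod>p\<in>S - X. 1))"
      by (rule prod_add[OF S])
    thus ?thesis by (simp add: add.commute)
  qed
  also have "\<dots> \<le> (\<Prod>p\<in>S. (1 + t p) * exp ((w p - 1) * t p))"
  proof (rule prod_mono)
    fix p assume p: "p \<in> S"
    have "0 \<le> w p" by (rule order_trans[OF zero_le_one w1])
    hence "0 \<le> t p * w p" using t[OF p] by simp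
    thus "0 \<le> 1 + t p * w p \<and> 1 + t p * w p \<le> (1 + t p) * exp ((w p - 1) * t p)"
      using factor_bound[OF t[OF p] w1[of p]] by simp
  qed
  also have "\<dots> = (\<Prod>p\<in>S. 1 + t p) * exp (\<Sum>p\<in>S. (w p - 1) * t p)"
    by (simp add: prod.distrib exp_sum S)
  also have "(\<Sum>p\<in>S. (w p - 1) * t p) = (exp lam - 1) * (\<Sum>p\<in>S \<inter> Q. t p)"
  proof -
    have "(\<Sum>p\<in>S. (w p - 1) * t p) = (\<Sum>p\<in>S. if p \<in> Q then (exp lam - 1) * t p else 0)"
      by (intro sum.cong refl) (simp add: w_def)
    also have "\<dots> = (\<Sum>p\<in>S \<inter> Q. (exp lam - 1) * t p)"
      using S by (simp add: sum.If_cases Int_def)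
    finally show ?thesis by (simp add: sum_distrib_left)
  qed
  finally have fin: "(\<Sum>T\<in>{T\<in>Pow S. D \<le> real (card (T \<inter> Q))}. \<Prod>p\<in>T. t p)
      \<le> exp (- lam * D) * ((\<Prod>p\<in>S. 1 + t p) * exp ((exp lam - 1) * (\<Sum>p\<in>S \<inter> Q. t p)))"
    by (simp add: mult_left_mono)
  have eq: "exp (- lam * D) * ((\<Prod>p\<in>S. 1 + t p) * exp ((exp lam - 1) * (\<Sum>p\<in>S \<inter> Q. t p)))
     = exp (- lam * D + (exp lam - 1) * (\<Sum>p\<in>S \<inter> Q. t p)) * (\<Prod>p\<in>S. 1 + t p)"
    by (simp only: exp_add mult_ac)
  show ?thesis using fin eq by linarith
qed


lemma tt_bound:
  fixes AA N :: real and k p :: nat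
  assumes AA: "AA > 0" and L1: "ln N > 1" and l2: "ln (ln N) > 0" and l3: "ln (ln (ln N)) \<ge> 1"
    and k: "real k \<ge> 1" and p: "exp (real k) * ln N * ln (ln N) < real p"
  shows "0 \<le> tt AA N p \<and> tt AA N p \<le> exp (-2*AA) *
           ((ln N powr (1 - sig AA N) * ln (ln N) powr sig AA N / ln (ln (ln N)) powr (1 - sig AA N))^2 / (real k)^2
          + (ln N powr (1 - sig AA N) * ln (ln N) powr sig AA N / ln (ln (ln N)) powr (1 - sig AA N)) / real k) / real p"
proof -
  define L where "L = ln N"
  define l2 where "l2 = ln (ln N)"
  define l3 where "l3 = ln (ln (ln N))"
  define s where "s = sig AA N"
  define Cn where "Cn = L powr (1 - s) * l2 powr s / l3 powr (1 - s)"
  have l2L: "l2 = ln L" and l3l: "l3 = ln l2" unfolding L_def l2_def l3_def by simp_all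
  have Lp: "L > 1" "l2 > 0" "l3 \<ge> 1" using L1 l2 l3 unfolding L_def l2_def l3_def by auto
  have s_def': "s = 1/2 + AA / l2" unfolding s_def sig_def l2_def by simp
  have X0: "L * l2 > 0" using Lp by simp
  have lnX: "ln (L * l2) = l2 + l3" using Lp by (simp add: ln_mult_pos l2L l3l)
  have "0 < exp (real k) * (ln N * ln (ln N))" using X0 unfolding L_def l2_def by simp
  hence "0 < exp (real k) * ln N * ln (ln N)" by (simp only: mult.assoc)
  hence p0: "real p > 0" using p by linarith
  have "ln (exp (real k) * (L * l2)) < ln (real p)"
    using p X0 p0 unfolding L_def l2_def by (subst ln_less_cancel_iff) (auto simp: mult.assoc)
  hence lnp: "real k + l2 + l3 < ln (real p)" using X0 lnX by (simp add: ln_mult_pos)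
  define D where "D = ln (real p) - l2 - l3"
  have Dk: "D > real k" using lnp unfolding D_def by simp
  have D0: "D > 0" using Dk k by simp
  define ps where "ps = real p powr s"
  have ps0: "ps > 0" unfolding ps_def using p0 by simp
  have psps: "ps * ps = real p * exp (2 * AA / l2 * ln (real p))"
  proof -
    have "ps * ps = real p powr (s + s)" unfolding ps_def by (simp only: powr_add)
    also have "s + s = 1 + 2 * AA / l2" unfolding s_def' by simp
    also have "real p powr (1 + 2 * AA / l2) = real p * real p powr (2 * AA / l2)"
      using p0 by (simp add: powr_add)
    also have "real p powr (2 * AA / l2) = exp (2 * AA / l2 * ln (real p))"
      using p0 by (simp add: powr_def)
    finally show ?thesis .
  qed
  have "2 * AA \<le> 2 * AA / l2 * ln (real p)"
  proof -
    have "l2 \<le> ln (real p)" using lnp k Lp by linarith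
    hence "2 * AA / l2 * l2 \<le> 2 * AA / l2 * ln (real p)" using AA Lp by (intro mult_left_mono) auto
    thus ?thesis using Lp by simp
  qed
  hence "exp (2 * AA) \<le> exp (2 * AA / l2 * ln (real p))" by simp
  hence pspsb: "real p * exp (2 * AA) \<le> ps * ps" unfolding psps using p0 by (intro mult_left_mono) auto
  have Cn0: "Cn \<ge> 0" unfolding Cn_def by simp
  define u where "u = Cn / D"
  have u0: "u \<ge> 0" unfolding u_def using Cn0 D0 by simp
  have uk: "u \<le> Cn / real k" unfolding u_def using Cn0 D0 Dk k by (intro divide_left_mono) auto
  have fp_eq: "fp AA N p = u / ps"
    unfolding fp_def u_def ps_def D_def Cn_def L_def[symmetric] s_def[symmetric]
    by (simp add: l2L[symmetric] l3l[symmetric] mult_ac)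
  define h where "h = real p / (real p + 1)"
  have h01: "0 \<le> h" "h \<le> 1" unfolding h_def using p0 by auto
  have tt_eq: "tt AA N p = h * (u + u^2) / (ps * ps)"
    unfolding tt_def fp_eq s_def[symmetric] ps_def[symmetric] h_def[symmetric]
    using ps0 by (simp add: field_simps power2_eq_square)
  have nn: "0 \<le> h * (u + u^2)" using h01 u0 by simp
  have A: "0 \<le> tt AA N p" unfolding tt_eq using nn ps0 by simp
  have B: "tt AA N p \<le> exp (-2*AA) * (Cn^2 / (real k)^2 + Cn / real k) / real p"
  proof -
    have "h * (u + u^2) \<le> 1 * (Cn / real k + (Cn / real k)^2)"
      using h01 u0 uk by (intro mult_mono add_mono power_mono) auto
    also have "\<dots> = Cn^2 / (real k)^2 + Cn / real k" by (simp add: power_divide)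
    finally have num: "h * (u + u^2) \<le> Cn^2 / (real k)^2 + Cn / real k" .
    have "tt AA N p \<le> (Cn^2 / (real k)^2 + Cn / real k) / (ps * ps)"
      unfolding tt_eq using num ps0 by (intro divide_right_mono) auto
    also have "\<dots> \<le> (Cn^2 / (real k)^2 + Cn / real k) / (real p * exp (2 * AA))"
      using pspsb p0 Cn0 k ps0 by (intro divide_left_mono) (auto intro!: mult_pos_pos)
    also have "\<dots> = exp (-2*AA) * (Cn^2 / (real k)^2 + Cn / real k) / real p"
      by (simp add: exp_minus field_simps)
    finally show "tt AA N p \<le> exp (-2*AA) * (Cn^2 / (real k)^2 + Cn / real k) / real p" .
  qed
  show ?thesis using A B unfolding Cn_def L_def l2_def l3_def s_def by simp
qed


lemma powr_sq: "x > 0 \<Longrightarrow> (x powr a)^2 = x powr (2 * a)"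
  for x :: real by (simp add: power2_eq_square powr_add[symmetric])

lemma Pk_eq: "Pk N k = {p. prime p \<and> exp (real k) * ln N * ln (ln N) < real p \<and>
                         real p \<le> exp 1 * (exp (real k) * ln N * ln (ln N))}"
  unfolding Pk_def by (simp add: exp_add mult_ac)

lemma finite_Pk: "finite (Pk N k)"
  unfolding Pk_eq by (rule finite_prime_interval)

lemma mu_bound:
  fixes AA a rho N :: real and k :: nat
  assumes AA: "AA > 0" and a: "a > 0" and L1: "ln N > 1" and l2: "ln (ln N) \<ge> 1" and l3: "ln (ln (ln N)) \<ge> 1"
    and s1: "AA / ln (ln N) \<le> 1/2" and k1: "real k \<ge> 1" and kl: "real k \<le> ln (ln N)"
    and mert: "\<forall>Z. ln N * ln (ln N) \<le> Z \<longrightarrow> (\<Sum>p | prime p \<and> Z < real p \<and> real p \<le> exp 1 * Z. 1 / real p) \<le> 17/10 / ln Z"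
    and G: "exp (-2*AA) * (17/10) * (exp (2*AA * ln (ln (ln N)) / ln (ln N)) + ln (ln N) * ln (ln (ln N)) * exp AA / sqrt (ln N)) \<le> rho * a"
  shows "(\<Sum>p\<in>PP gam N \<inter> Pk N k. tt AA N p) \<le> rho * Delta AA a N k"
proof -
  define L where "L = ln N"
  define l2 where "l2 = ln (ln N)"
  define l3 where "l3 = ln (ln (ln N))"
  define s where "s = sig AA N"
  define Cn where "Cn = L powr (1 - s) * l2 powr s / l3 powr (1 - s)"
  define Q where "Q = L powr (2 - 2 * s) / l3 powr (2 - 2 * s)"
  define M where "M = L powr (1 - s)"
  have l2L: "l2 = ln L" and l3l: "l3 = ln l2" unfolding L_def l2_def l3_def by simp_all
  have Lp: "L > 1" "l2 \<ge> 1" "l3 \<ge> 1" using L1 l2 l3 unfolding L_def l2_def l3_def by auto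
  have s_def': "s = 1/2 + AA / l2" unfolding s_def sig_def l2_def by simp
  have s1': "AA / l2 \<le> 1/2" using s1 unfolding l2_def .
  have s0': "0 \<le> AA / l2" using AA Lp by simp
  have s12: "s \<ge> 1/2" "s \<le> 1" using s1' s0' unfolding s_def' by linarith+
  have Lpow: "L powr x = exp (x * l2)" for x using Lp by (simp add: powr_def l2L)
  have M_eq: "M = sqrt L / exp AA"
  proof -
    have "M = L powr (1/2 - AA / l2)" unfolding M_def s_def' by (simp add: algebra_simps)
    also have "\<dots> = L powr (1/2) / L powr (AA / l2)" by (rule powr_diff)
    also have "L powr (1/2) = sqrt L" using Lp by (simp add: powr_half_sqrt)
    also have "L powr (AA / l2) = exp AA" unfolding Lpow using Lp by simp
    finally show ?thesis .
  qed
  have M0: "M > 0" unfolding M_eq using Lp by simp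
  have MeA: "M * exp AA = sqrt L" unfolding M_eq by simp
  have l3p: "l3 powr (1 - s) \<ge> 1" using Lp s12 by (intro ge_one_powr_ge_zero) auto
  have l3p2: "l3 powr (2 - 2 * s) \<le> l3"
  proof -
    have "l3 powr (2 - 2 * s) \<le> l3 powr 1" using Lp s12 by (intro powr_mono) auto
    thus ?thesis using Lp by simp
  qed
  have l3p2pos: "l3 powr (2 - 2 * s) > 0" using Lp by simp
  have l2ps: "l2 powr s \<le> l2"
  proof -
    have "l2 powr s \<le> l2 powr 1" using Lp s12 by (intro powr_mono) auto
    thus ?thesis using Lp by simp
  qed
  have LQ: "L powr (2 - 2 * s) = M^2" unfolding M_def using Lp powr_sq[of L "1 - s"] by (simp add: algebra_simps)
  have Q_eq: "Q = M^2 / l3 powr (2 - 2 * s)" unfolding Q_def LQ ..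
  have Q0: "Q > 0" unfolding Q_eq using M0 l3p2pos by simp
  have Qlow: "Q \<ge> M^2 / l3" unfolding Q_eq using M0 l3p2 l3p2pos Lp
    by (intro divide_left_mono) (auto intro!: mult_pos_pos)
  have Cn_sq: "Cn^2 = Q * (l2 powr s)^2"
  proof -
    have "Cn^2 = (L powr (1 - s))^2 * (l2 powr s)^2 / (l3 powr (1 - s))^2"
      unfolding Cn_def by (simp add: power_mult_distrib power_divide)
    also have "(L powr (1 - s))^2 = L powr (2 - 2 * s)" using Lp powr_sq[of L "1 - s"] by (simp add: algebra_simps)
    also have "(l3 powr (1 - s))^2 = l3 powr (2 - 2 * s)" using Lp powr_sq[of l3 "1 - s"] by (simp add: algebra_simps)
    finally show ?thesis unfolding Q_def by simp
  qed
  have l2sq: "(l2 powr s)^2 = l2 * exp (2 * AA * l3 / l2)"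
  proof -
    have "(l2 powr s)^2 = l2 powr (2 * s)" using Lp by (simp add: powr_sq)
    also have "2 * s = 1 + 2 * AA / l2" unfolding s_def' by simp
    also have "l2 powr (1 + 2 * AA / l2) = l2 * l2 powr (2 * AA / l2)" using Lp by (simp add: powr_add)
    also have "l2 powr (2 * AA / l2) = exp (2 * AA * l3 / l2)" using Lp by (simp add: powr_def l3l)
    finally show ?thesis .
  qed
  have Cn_le: "Cn \<le> Q * (l2 * l3 * exp AA / sqrt L)"
  proof -
    have "Cn \<le> M * l2 / 1" unfolding Cn_def M_def[symmetric]
      using M0 l2ps l3p Lp by (intro frac_le mult_left_mono) auto
    also have "M * l2 / 1 = (M^2 / l3) * (l2 * l3 * exp AA / sqrt L)"
      using Lp M0 MeA[symmetric] by (simp add: field_simps power2_eq_square)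
    also have "\<dots> \<le> Q * (l2 * l3 * exp AA / sqrt L)"
      using Qlow Lp by (intro mult_right_mono) auto
    finally show ?thesis .
  qed
  have Cn0: "Cn \<ge> 0" unfolding Cn_def by simp
  have kpos: "real k > 0" using k1 by simp
  define Z where "Z = exp (real k) * L * l2"
  have tb: "\<And>p. p \<in> Pk N k \<Longrightarrow> 0 \<le> tt AA N p \<and> tt AA N p \<le> exp (-2*AA) * (Cn^2 / (real k)^2 + Cn / real k) / real p"
  proof -
    fix p assume p: "p \<in> Pk N k"
    hence "exp (real k) * ln N * ln (ln N) < real p" by (simp add: Pk_def)
    from tt_bound[OF AA L1 _ l3 k1 this] Lp show "0 \<le> tt AA N p \<and> tt AA N p \<le> exp (-2*AA) * (Cn^2 / (real k)^2 + Cn / real k) / real p"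
      unfolding Cn_def L_def l2_def l3_def s_def by simp
  qed
  have "(\<Sum>p\<in>PP gam N \<inter> Pk N k. tt AA N p) \<le> (\<Sum>p\<in>Pk N k. tt AA N p)"
    using tb finite_Pk by (intro sum_mono2) auto
  also have "\<dots> \<le> (\<Sum>p\<in>Pk N k. exp (-2*AA) * (Cn^2 / (real k)^2 + Cn / real k) * (1 / real p))"
    using tb by (intro sum_mono) auto
  also have "\<dots> = exp (-2*AA) * (Cn^2 / (real k)^2 + Cn / real k) * (\<Sum>p\<in>Pk N k. 1 / real p)"
    by (simp add: sum_distrib_left)
  also have "(\<Sum>p\<in>Pk N k. 1 / real p) \<le> 17/10 / ln Z"
  proof -
    have "ln N * ln (ln N) \<le> Z" unfolding Z_def L_def l2_def using Lp k1 unfolding L_def l2_def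
      by (simp add: mult.assoc)
    hence "(\<Sum>p | prime p \<and> Z < real p \<and> real p \<le> exp 1 * Z. 1 / real p) \<le> 17/10 / ln Z" using mert by blast
    thus ?thesis unfolding Pk_eq Z_def L_def l2_def .
  qed
  also have "ln Z = real k + l2 + l3" unfolding Z_def using Lp by (simp add: ln_mult_pos l2L l3l mult.assoc)
  finally have mu1: "(\<Sum>p\<in>PP gam N \<inter> Pk N k. tt AA N p) \<le> exp (-2*AA) * (Cn^2 / (real k)^2 + Cn / real k) * (17/10 / (real k + l2 + l3))"
    using Cn0 kpos by (simp add: mult_left_mono)
  have "17/10 / (real k + l2 + l3) \<le> 17/10 / l2" using Lp k1 by (intro divide_left_mono) auto
  hence mu2: "(\<Sum>p\<in>PP gam N \<inter> Pk N k. tt AA N p) \<le> exp (-2*AA) * (Cn^2 / (real k)^2 + Cn / real k) * (17/10 / l2)"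
    using mu1 Cn0 kpos by (smt (verit) divide_nonneg_nonneg exp_gt_zero mult_left_mono mult_nonneg_nonneg zero_le_power)
  have kl': "real k \<le> l2" using kl unfolding l2_def .
  have "Cn * real k \<le> Cn * l2" by (rule mult_left_mono[OF kl' Cn0])
  hence inv_k: "Cn / real k \<le> Cn * l2 / (real k)^2"
    using kpos by (simp add: power2_eq_square field_simps)
  have "exp (-2*AA) * (Cn^2 / (real k)^2 + Cn / real k) * (17/10 / l2)
     \<le> exp (-2*AA) * (Q * (l2 * exp (2 * AA * l3 / l2)) / (real k)^2 + Q * (l2 * l3 * exp AA / sqrt L) * l2 / (real k)^2) * (17/10 / l2)"
  proof -
    have "Cn / real k \<le> Q * (l2 * l3 * exp AA / sqrt L) * l2 / (real k)^2"
      using inv_k Cn_le Lp kpos by (smt (verit) divide_right_mono mult_right_mono zero_le_power)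
    thus ?thesis unfolding Cn_sq l2sq using Lp by (intro mult_right_mono mult_left_mono add_mono) auto
  qed
  also have "\<dots> = (Q / (real k)^2) * (exp (-2*AA) * (17/10) * (exp (2*AA * l3 / l2) + l2 * l3 * exp AA / sqrt L))"
    using Lp kpos by (simp add: field_simps)
  also have "\<dots> \<le> (Q / (real k)^2) * (rho * a)"
    using G Q0 kpos unfolding L_def l2_def l3_def by (intro mult_left_mono) auto
  also have "\<dots> = rho * Delta AA a N k"
    unfolding Delta_def Q_def L_def l3_def s_def by (simp add: field_simps)
  finally show ?thesis using mu2 by linarith
qed


lemma LQ_eq:
  assumes "ln N > 1" "ln (ln N) > 0"
  shows "ln N powr (2 - 2 * sig AA N) = ln N / exp (2 * AA)"
proof -
  have "ln N powr (2 - 2 * sig AA N) = exp ((2 - 2 * sig AA N) * ln (ln N))"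
    using assms by (simp add: powr_def)
  also have "(2 - 2 * sig AA N) * ln (ln N) = ln (ln N) - 2 * AA"
    using assms unfolding sig_def by (simp add: field_simps)
  also have "exp (ln (ln N) - 2 * AA) = ln N / exp (2 * AA)"
    using assms by (simp add: exp_diff)
  finally show ?thesis .
qed

lemma Delta_lower:
  fixes AA a N :: real and k :: nat
  assumes AA: "AA > 0" and a: "a > 0" and L1: "ln N > 1" and l2: "ln (ln N) \<ge> 1" and l3: "ln (ln (ln N)) \<ge> 1"
    and s1: "AA / ln (ln N) \<le> 1/2" and k1: "real k \<ge> 1" and kl: "real k \<le> ln (ln N)"
  shows "a * exp (-2 * AA) * ln N / ((ln (ln N))^2 * ln (ln (ln N))) \<le> Delta AA a N k"
proof -
  define s where "s = sig AA N"
  have s0': "0 \<le> AA / ln (ln N)" using AA l2 by simp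
  have s12: "s \<ge> 1/2" "s \<le> 1" using s1 s0' unfolding s_def sig_def by linarith+
  have l3p2: "ln (ln (ln N)) powr (2 - 2 * s) \<le> ln (ln (ln N))"
  proof -
    have "ln (ln (ln N)) powr (2 - 2 * s) \<le> ln (ln (ln N)) powr 1" using l3 s12 by (intro powr_mono) auto
    thus ?thesis using l3 by simp
  qed
  have l3p2pos: "ln (ln (ln N)) powr (2 - 2 * s) > 0" using l3 by simp
  have kk: "(real k)^2 \<le> (ln (ln N))^2" using k1 kl by (intro power_mono) auto
  have den: "(real k)^2 * ln (ln (ln N)) powr (2 - 2 * s) \<le> (ln (ln N))^2 * ln (ln (ln N))"
    using kk l3p2 l3p2pos k1 by (intro mult_mono) auto
  have "a * exp (-2 * AA) * ln N / ((ln (ln N))^2 * ln (ln (ln N)))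
      \<le> a * exp (-2 * AA) * ln N / ((real k)^2 * ln (ln (ln N)) powr (2 - 2 * s))"
  proof (rule divide_left_mono[OF den])
    show "0 \<le> a * exp (-2 * AA) * ln N" using a L1 by simp
    have "0 < (real k)^2 * ln (ln (ln N)) powr (2 - 2 * s)" using k1 l3p2pos by simp
    moreover have "0 < (ln (ln N))^2 * ln (ln (ln N))"
    proof (rule mult_pos_pos)
      show "0 < ln (ln (ln N))" using l3 by linarith
      have "0 < ln (ln N)" using l2 by linarith
      thus "0 < (ln (ln N))^2" by (rule zero_less_power)
    qed
    ultimately show "0 < (ln (ln N))^2 * ln (ln (ln N)) * ((real k)^2 * ln (ln (ln N)) powr (2 - 2 * s))"
      by simp
  qed
  also have "\<dots> = Delta AA a N k"
  proof -
    have LQ: "ln N powr (2 - 2 * s) = ln N / exp (2 * AA)" unfolding s_def using LQ_eq[of N AA] L1 l2 by simp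
    show ?thesis unfolding Delta_def s_def[symmetric] LQ using l2 by (simp add: exp_minus field_simps)
  qed
  finally show ?thesis .
qed

lemma ln_strict: "0 < x \<Longrightarrow> x \<noteq> 1 \<Longrightarrow> ln x < x - (1::real)"
  using ln_le_minus_one[of x] ln_eq_minus_one[of x] by force

theorem proposition3p2:
  fixes AA gam a :: real
  assumes "AA > 0"
    and "0 < gam" and "gam < 1 / (exp 1 - 1)"
    and "exp 1 - 1 < a" and "a < 1 / gam"
  shows "(\<lambda>N. (\<Sum>\<^sub>\<infinity>n\<in>{n. n \<ge> 1 \<and> n \<notin> MM AA gam a N}. term_n AA gam N n)
               / (\<Sum>\<^sub>\<infinity>n\<in>{n. n \<ge> 1}. (ff AA gam N n)\<^sup>2))
         \<in> o[at_top](\<lambda>N. AN AA gam N)"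
proof -
  note AA = assms(1)
  have e27: "exp 1 \<ge> (27/10::real)" by (rule e_ge_27)
  have a17: "a > 17/10" using assms(4) e27 by linarith
  have a0: "a > 0" using a17 by simp
  have gam1: "gam \<le> 1"
  proof -
    have "1 / (exp 1 - 1) \<le> (1::real)" using e27 by (simp add: divide_le_eq)
    thus ?thesis using assms(3) by linarith
  qed
  define r0 where "r0 = 17/10 * exp (-2*AA) / a"
  have eA: "exp (-2*AA) < 1" "exp (-2*AA) > 0" using AA by auto
  have r0p: "0 < r0" unfolding r0_def using eA a0 by simp
  have r01: "r0 < 1"
  proof -
    have "17/10 * exp (-2*AA) < 17/10 * 1" using eA by simp
    also have "\<dots> < a" using a17 by simp
    finally show ?thesis unfolding r0_def using a0 by (simp add: divide_less_eq)
  qed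
  define rho where "rho = (1 + r0) / 2"
  have rho: "0 < rho" "rho < 1" "r0 < rho" unfolding rho_def using r0p r01 by auto
  define lam where "lam = - ln rho"
  have lam0: "lam > 0" unfolding lam_def using rho by simp
  have elam: "exp lam = 1 / rho" unfolding lam_def using rho by (simp add: exp_minus inverse_eq_divide)
  define del where "del = lam - (exp lam - 1) * rho"
  have del_eq: "del = - ln rho - 1 + rho" unfolding del_def lam_def using rho by (simp add: exp_minus field_simps)
  have del0: "del > 0" unfolding del_eq using ln_strict[of rho] rho by simp
  define kap where "kap = del * a * exp (-2*AA)"
  have kap0: "kap > 0" unfolding kap_def using del0 a0 by simp
  have Glim: "((\<lambda>N::real. exp (-2*AA) * (17/10) * (exp (2*AA * ln (ln (ln N)) / ln (ln N)) + ln (ln N) * ln (ln (ln N)) * exp AA / sqrt (ln N)))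
      \<longlongrightarrow> exp (-2*AA) * (17/10) * (1 + 0)) at_top"
    by real_asymp
  have Glt: "exp (-2*AA) * (17/10) * (1 + 0) < rho * a"
    using rho(3) a0 unfolding r0_def by (simp add: field_simps)
  obtain Y0 where Y0: "\<And>Y Z. Y \<ge> Y0 \<Longrightarrow> Y \<le> Z \<Longrightarrow>
      (\<Sum>p | prime p \<and> Z < real p \<and> real p \<le> exp 1 * Z. 1 / real p) \<le> 17/10 / ln Z"
    using mertens_interval_inv unfolding eventually_at_top_linorder by blast
  have evs: "eventually (\<lambda>N::real. ln N > 1 \<and> ln (ln N) \<ge> 1 \<and> ln (ln (ln N)) \<ge> 1 \<and> AA / ln (ln N) \<le> 1/2
      \<and> ln N * ln (ln N) \<ge> Y0
      \<and> exp (-2*AA) * (17/10) * (exp (2*AA * ln (ln (ln N)) / ln (ln N)) + ln (ln N) * ln (ln (ln N)) * exp AA / sqrt (ln N)) < rho * a) at_top"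
  proof (intro eventually_conj)
    show "eventually (\<lambda>N::real. ln N > 1) at_top" by real_asymp
    show "eventually (\<lambda>N::real. ln (ln N) \<ge> 1) at_top" by real_asymp
    show "eventually (\<lambda>N::real. ln (ln (ln N)) \<ge> 1) at_top" by real_asymp
    show "eventually (\<lambda>N::real. AA / ln (ln N) \<le> 1/2) at_top" using AA by real_asymp
    have "filterlim (\<lambda>N::real. ln N * ln (ln N)) at_top at_top" by real_asymp
    thus "eventually (\<lambda>N::real. ln N * ln (ln N) \<ge> Y0) at_top" by (simp add: filterlim_at_top)
    show "eventually (\<lambda>N::real. exp (-2*AA) * (17/10) * (exp (2*AA * ln (ln (ln N)) / ln (ln N)) + ln (ln N) * ln (ln (ln N)) * exp AA / sqrt (ln N)) < rho * a) at_top"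
      using order_tendstoD(2)[OF Glim Glt] .
  qed
  have Rlim: "((\<lambda>N::real. ln (ln N) * exp (- kap * (ln N / ((ln (ln N))^2 * ln (ln (ln N)))))) \<longlongrightarrow> 0) at_top"
    using kap0 by real_asymp
  have main: "(\<Sum>T\<in>Eset AA gam a N. \<Prod>p\<in>T. tt AA N p)
       \<le> ln (ln N) * exp (- kap * (ln N / ((ln (ln N))^2 * ln (ln (ln N))))) * (\<Prod>p\<in>PP gam N. 1 + tt AA N p)"
    if N: "ln N > 1" "ln (ln N) \<ge> 1" "ln (ln (ln N)) \<ge> 1" "AA / ln (ln N) \<le> 1/2" "ln N * ln (ln N) \<ge> Y0"
      "exp (-2*AA) * (17/10) * (exp (2*AA * ln (ln (ln N)) / ln (ln N)) + ln (ln N) * ln (ln (ln N)) * exp AA / sqrt (ln N)) < rho * a"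
    for N
  proof -
    define K where "K = nat \<lfloor>ln (ln N) powr gam\<rfloor>"
    define P where "P = (\<Prod>p\<in>PP gam N. 1 + tt AA N p)"
    define Dm where "Dm = a * exp (-2 * AA) * ln N / ((ln (ln N))^2 * ln (ln (ln N)))"
    have tt0: "\<And>p. p \<in> PP gam N \<Longrightarrow> tt AA N p \<ge> 0"
    proof -
      fix p assume "p \<in> PP gam N"
      hence "exp (real (1::nat)) * ln N * ln (ln N) < real p" by (simp add: PP_def)
      from tt_bound[OF AA N(1) _ N(3) _ this] N(2) show "tt AA N p \<ge> 0" by simp
    qed
    have P0: "P \<ge> 0" unfolding P_def using tt0 by (intro prod_nonneg) (auto intro: add_nonneg_nonneg)
    have Kl: "real K \<le> ln (ln N)"
    proof -
      have "real K \<le> ln (ln N) powr gam" unfolding K_def by (rule real_nat_floor_le) simp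
      also have "\<dots> \<le> ln (ln N) powr 1" using N(2) gam1 by (intro powr_mono) auto
      finally show ?thesis using N(2) by simp
    qed
    have mert: "\<forall>Z. ln N * ln (ln N) \<le> Z \<longrightarrow> (\<Sum>p | prime p \<and> Z < real p \<and> real p \<le> exp 1 * Z. 1 / real p) \<le> 17/10 / ln Z"
      using Y0 N(5) by blast
    have per_k: "(\<Sum>T\<in>{T\<in>Pow (PP gam N). Delta AA a N k \<le> real (card (T \<inter> Pk N k))}. \<Prod>p\<in>T. tt AA N p)
        \<le> exp (- del * Dm) * P" if k: "k \<in> {1..K}" for k
    proof -
      have k1: "real k \<ge> 1" and kK: "real k \<le> real K" using k by auto
      have kl: "real k \<le> ln (ln N)" using kK Kl by linarith
      have mu: "(\<Sum>p\<in>PP gam N \<inter> Pk N k. tt AA N p) \<le> rho * Delta AA a N k"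
        using N(6) by (intro mu_bound[OF AA a0 N(1) N(2) N(3) N(4) k1 kl mert]) simp
      have Dl: "Dm \<le> Delta AA a N k" unfolding Dm_def by (rule Delta_lower[OF AA a0 N(1) N(2) N(3) N(4) k1 kl])
      have "(\<Sum>T\<in>{T\<in>Pow (PP gam N). Delta AA a N k \<le> real (card (T \<inter> Pk N k))}. \<Prod>p\<in>T. tt AA N p)
          \<le> exp (- lam * Delta AA a N k + (exp lam - 1) * (\<Sum>p\<in>PP gam N \<inter> Pk N k. tt AA N p)) * P"
        unfolding P_def using finite_PP tt0 lam0 by (intro chernoff) auto
      also have "\<dots> \<le> exp (- lam * Delta AA a N k + (exp lam - 1) * (rho * Delta AA a N k)) * P"
      proof -
        have "exp lam - 1 \<ge> 0" using lam0 by simp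
        hence "(exp lam - 1) * (\<Sum>p\<in>PP gam N \<inter> Pk N k. tt AA N p) \<le> (exp lam - 1) * (rho * Delta AA a N k)"
          using mu by (rule mult_left_mono[rotated])
        thus ?thesis using P0 by (intro mult_right_mono) auto
      qed
      also have "- lam * Delta AA a N k + (exp lam - 1) * (rho * Delta AA a N k) = - del * Delta AA a N k"
        unfolding del_def by (simp add: algebra_simps)
      also have "exp (- del * Delta AA a N k) * P \<le> exp (- del * Dm) * P"
        using Dl del0 P0 by (intro mult_right_mono) auto
      finally show ?thesis .
    qed
    have "(\<Sum>T\<in>Eset AA gam a N. \<Prod>p\<in>T. tt AA N p)
        \<le> (\<Sum>k\<in>{1..K}. \<Sum>T\<in>{T\<in>Pow (PP gam N). Delta AA a N k \<le> real (card (T \<inter> Pk N k))}. \<Prod>p\<in>T. tt AA N p)"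
      unfolding Eset_def K_def[symmetric] using finite_PP tt0
      by (intro union_bound) (auto intro!: prod_nonneg)
    also have "\<dots> \<le> (\<Sum>k\<in>{1..K}. exp (- del * Dm) * P)"
      by (intro sum_mono per_k)
    also have "\<dots> = real K * (exp (- del * Dm) * P)" by simp
    also have "\<dots> \<le> ln (ln N) * (exp (- del * Dm) * P)"
      using Kl P0 by (intro mult_right_mono) auto
    also have "ln (ln N) * (exp (- del * Dm) * P) = ln (ln N) * exp (- kap * (ln N / ((ln (ln N))^2 * ln (ln (ln N))))) * P"
    proof -
      have "- del * Dm = - kap * (ln N / ((ln (ln N))^2 * ln (ln (ln N))))"
        unfolding Dm_def kap_def by (simp add: field_simps)
      thus ?thesis by (simp only: mult.assoc)
    qed
    finally show ?thesis unfolding P_def .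
  qed
  show ?thesis unfolding smallo_def
  proof (intro CollectI allI impI)
    fix c :: real assume c: "c > 0"
    have evR: "eventually (\<lambda>N::real. ln (ln N) * exp (- kap * (ln N / ((ln (ln N))^2 * ln (ln (ln N)))))  < c) at_top"
      using order_tendstoD(2)[OF Rlim c] .
    show "eventually (\<lambda>N. norm ((\<Sum>\<^sub>\<infinity>n\<in>{n. n \<ge> 1 \<and> n \<notin> MM AA gam a N}. term_n AA gam N n)
               / (\<Sum>\<^sub>\<infinity>n\<in>{n. n \<ge> 1}. (ff AA gam N n)\<^sup>2)) \<le> c * norm (AN AA gam N)) at_top"
      using evs evR
    proof eventually_elim
      case (elim N)
      define num where "num = (\<Sum>T\<in>Eset AA gam a N. \<Prod>p\<in>T. tt AA N p)"
      define P where "P = (\<Prod>p\<in>PP gam N. 1 + tt AA N p)"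
      define den where "den = (\<Sum>\<^sub>\<infinity>n\<in>{n. n \<ge> 1}. (ff AA gam N n)\<^sup>2)"
      define R where "R = ln (ln N) * exp (- kap * (ln N / ((ln (ln N))^2 * ln (ln (ln N)))))"
      have tt0: "\<And>p. p \<in> PP gam N \<Longrightarrow> tt AA N p \<ge> 0"
      proof -
        fix p assume "p \<in> PP gam N"
        hence "exp (real (1::nat)) * ln N * ln (ln N) < real p" by (simp add: PP_def)
        from tt_bound[OF AA _ _ _ _ this] elim show "tt AA N p \<ge> 0" by simp
      qed
      have num0: "num \<ge> 0" unfolding num_def using tt0
        by (intro sum_nonneg prod_nonneg) (auto simp: Eset_def)
      have P0: "P \<ge> 0" unfolding P_def using tt0 by (intro prod_nonneg) (auto intro: add_nonneg_nonneg)
      have numR: "num \<le> R * P" unfolding num_def R_def P_def using main elim by blast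
      have "R * P \<le> c * P" using elim P0 unfolding R_def by (intro mult_right_mono) auto
      hence numc: "num \<le> c * P" using numR by linarith
      have AN_eq: "AN AA gam N = P / den"
        unfolding AN_def den_def P_def infsum_total total_sum ..
      have num_eq: "(\<Sum>\<^sub>\<infinity>n\<in>{n. n \<ge> 1 \<and> n \<notin> MM AA gam a N}. term_n AA gam N n) = num"
        unfolding num_def by (rule infsum_num)
      have "norm (num / den) = num / \<bar>den\<bar>" using num0 by simp
      also have "\<dots> \<le> c * P / \<bar>den\<bar>" using numc by (intro divide_right_mono) auto
      also have "\<dots> = c * norm (P / den)" using P0 by simp
      finally show ?case unfolding num_eq den_def[symmetric] AN_eq .
    qed
  qed
qed


end
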